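(* Let $k,n\ge1$, let $I$ be a composition of $k+n$, and let $I'$ be the composition of $n$ with $\mathrm{Des}(I')=\{a\ge1: k+a\in\mathrm{Des}(I)\}$. Let $v=1^{i'_1}2^{i'_2}\cdots$ be the nondecreasing word of evaluation $I'=(i'_1,i'_2,\dots)$. Let $r=\ell(I)$, let $K$ be the composition of $k$ with $\mathrm{Des}(K)=\mathrm{Des}(I)\cap[1,k-1]$ and $s=\ell(K)$. Then the coefficient of $\Psi_I$ in $\zeta(\tilde S_k\star_q\mathbf M_v)$ is the Gaussian binomial coefficient $\begin{bmatrix}k+r-s\\ r-s\end{bmatrix}_q$.
   Context: Compositions: positive integers with given sum; $\ell(I)$ number of parts; $\mathrm{Des}(I)$ the set of partial sums other than the total. Over $\mathbb K(q)$ ($\mathrm{char}\,\mathbb K=0$): packed words are words with letter set $\{1,\dots,m\}$; $\mathrm{pack}$ replaces the $t$-th smallest letter by $t$. For a packed word $w$ of length $N$: $\mathrm{WC}(w)$ is the composition of $N$ whose descent set is the set of positions $p<N$ with $w_p$ not occurring in $w_{p+1}\cdots w_N$; $\mathrm{sinv}(w)=\#\{i<j:w_i>w_j,\ w_j\text{ not occurring in }w_{j+1}\cdots w_N\}$. $\mathbf{WQSym}$ has basis $\mathbf M_u$ with $\mathbf M_{u'}\mathbf M_{u''}=\sum\mathbf M_u$ over packed $u=x\cdot y$ with $\mathrm{pack}(x)=u'$, $\mathrm{pack}(y)=u''$; $\mathbf M_{u'}\star_q\mathbf M_{u''}=\sum q^{\mathrm{sinv}(u)-\mathrm{sinv}(u')-\mathrm{sinv}(u'')}\mathbf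 M_u$ over the same $u$. $\mathbf{Sym}$ is the quotient by the span of $\mathbf M_u-\mathbf M_{u'}$ with $\mathrm{WC}(u)=\mathrm{WC}(u')$, $\zeta$ the quotient map, $\Psi_I=\zeta(\mathbf M_u)$ for $\mathrm{WC}(u)=I$ (a basis). $\tilde S_k=\sum\mathbf M_u$ over nondecreasing packed words $u$ of length $k$. *)

theory Defs
  imports "HOL-Computational_Algebra.Polynomial" "HOL-Computational_Algebra.Fraction_Field"
begin

definition is_comp :: "nat list \<Rightarrow> bool" where
  "is_comp I \<longleftrightarrow> (\<forall>x\<in>set I. 0 < x)"

definition Des :: "nat list \<Rightarrow> nat set" where
  "Des I = {sum_list (take j I) | j. 0 < j \<and> j < length I}"

(* the composition of N (N >= 1) whose descent set is D \<inter> [1, N-1] *)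
definition comp_of :: "nat \<Rightarrow> nat set \<Rightarrow> nat list" where
  "comp_of N D = (let ps = sorted_list_of_set ({p\<in>D. 0 < p \<and> p < N} \<union> {N})
                  in map (\<lambda>(a,b). b - a) (zip (0 # ps) ps))"

definition packed :: "nat list \<Rightarrow> bool" where
  "packed w \<longleftrightarrow> set w = {1..card (set w)}"

definition pack :: "nat list \<Rightarrow> nat list" where
  "pack w = map (\<lambda>x. card {y\<in>set w. y \<le> x}) w"

(* positions p < N (1-based) such that w_p does not occur in w_{p+1} ... w_N *)
definition wdes :: "nat list \<Rightarrow> nat set" where
  "wdes w = {p. 1 \<le> p \<and> p < length w \<and> w ! (p - 1) \<notin> set (drop p w)}"

definition WC :: "nat list \<Rightarrow> nat list" where
  "WC w = comp_of (length w) (wdes w)"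

(* 0-based indices *)
definition sinv :: "nat list \<Rightarrow> nat" where
  "sinv w = card {(i, j). i < j \<and> j < length w \<and> w ! i > w ! j
                      \<and> w ! j \<notin> set (drop (Suc j) w)}"

definition nondec_word :: "nat list \<Rightarrow> nat list" where
  "nondec_word J = concat (map (\<lambda>j. replicate (J ! j) (Suc j)) [0..<length J])"

definition qX :: "'a::field_char_0 poly fract" where
  "qX = Fract [:0, 1:] 1"

(* elements of WQSym over K(q): coefficient functions in the basis M_u (u packed) *)
type_synonym 'a wqsym = "nat list \<Rightarrow> 'a poly fract"

definition M :: "nat list \<Rightarrow> 'a::field_char_0 wqsym" where
  "M v = (\<lambda>u. if u = v then 1 else 0)"

definition S_tilde :: "nat \<Rightarrow> 'a::field_char_0 wqsym" where
  "S_tilde k = (\<lambda>u. if packed u \<and> length u = k \<and> sorted u then 1 else 0)"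

(* the q-deformed product, extended bilinearly:
   M_{u'} *q M_{u''} = sum over packed u = x.y, pack x = u', pack y = u''
   of q^(sinv u - sinv u' - sinv u'') M_u *)
definition qstar :: "'a::field_char_0 wqsym \<Rightarrow> 'a wqsym \<Rightarrow> 'a wqsym" where
  "qstar f g = (\<lambda>u. if packed u then
      (\<Sum>i\<in>{0..length u}. f (pack (take i u)) * g (pack (drop i u)) *
          qX powi (int (sinv u) - int (sinv (pack (take i u))) - int (sinv (pack (drop i u)))))
     else 0)"

(* coefficient of Psi_I in zeta(f): since zeta(M_u) = Psi_{WC(u)} and the Psi_I form a basis *)
definition psi_coeff :: "nat list \<Rightarrow> 'a::field_char_0 wqsym \<Rightarrow> 'a poly fract" where
  "psi_coeff I f = (\<Sum>u\<in>{u. packed u \<and> length u = sum_list I \<and> WC u = I}. f u)"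

definition qint :: "nat \<Rightarrow> 'a::field_char_0 poly fract" where
  "qint m = (\<Sum>i<m. qX ^ i)"

definition qfact :: "nat \<Rightarrow> 'a::field_char_0 poly fract" where
  "qfact m = (\<Prod>i\<in>{1..m}. qint i)"

definition qbinom :: "nat \<Rightarrow> nat \<Rightarrow> 'a::field_char_0 poly fract" where
  "qbinom N m = (if m \<le> N then qfact N / (qfact m * qfact (N - m)) else 0)"

end

theory Submission
  imports Defs
begin


lemma qint_add: "qint (a + b) = (qint a + qX ^ a * qint b :: 'a::field_char_0 poly fract)"
  unfolding qint_def
proof (induction b)
  case 0 then show ?case by simp
next
  case (Suc b)
  have "(\<Sum>i<a + Suc b. qX ^ i) = (\<Sum>i<a + b. qX ^ i) + (qX::'a poly fract) ^ (a+b)" by simp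
  also have "\<dots> = (\<Sum>i<a. qX ^ i) + qX ^ a * (\<Sum>i<b. qX ^ i) + qX^a * qX^b"
    using Suc by (simp add: power_add)
  finally show ?case by (simp add: algebra_simps)
qed

lemma qint_nz: "m \<ge> 1 \<Longrightarrow> qint m \<noteq> (0::'a::field_char_0 poly fract)"
proof -
  assume m: "m \<ge> 1"
  have pw: "\<And>p::'a poly. \<And>i. (Fract p 1) ^ i = Fract (p^i) 1"
    subgoal for p i by (induction i) (simp_all add: One_fract_def mult_fract)
    done
  have "qint m = Fract (\<Sum>i<m. [:0,1:]^i) (1::'a poly)"
    unfolding qint_def qX_def
    by (induction m) (simp_all add: pw Zero_fract_def add_fract)
  moreover have "poly (\<Sum>i<m. [:0,1:]^i) (1::'a) = of_nat m"
    by (induction m) (simp_all add: poly_sum)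
  hence "(\<Sum>i<m. [:0,1:]^i) \<noteq> (0::'a poly)" using m by auto
  ultimately show ?thesis by (simp add: eq_fract Zero_fract_def)
qed

lemma qfact_Suc: "qfact (Suc m) = qfact m * qint (Suc m)"
  unfolding qfact_def by (simp add: atLeastAtMostSuc_conv mult.commute)

lemma qfact_nz: "qfact m \<noteq> (0::'a::field_char_0 poly fract)"
  by (induction m) (auto simp: qfact_Suc qint_nz, simp add: qfact_def)

lemma qfact_0: "qfact 0 = 1" by (simp add: qfact_def)

lemma qbinom_0: "qbinom m 0 = (1::'a::field_char_0 poly fract)"
  using qfact_nz[of m] by (simp add: qbinom_def qfact_0)

lemma qbinom_diag: "qbinom m m = (1::'a::field_char_0 poly fract)"
  using qfact_nz[of m] by (simp add: qbinom_def qfact_0)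

lemma qbinom_rec:
  "qbinom (Suc c + Suc k) (Suc c) =
     qbinom (c + Suc k) (Suc c) + qX ^ (Suc k) * (qbinom (c + Suc k) c :: 'a::field_char_0 poly fract)"
proof -
  define A :: "'a poly fract" where "A = qfact c"
  define B :: "'a poly fract" where "B = qfact k"
  define C :: "'a poly fract" where "C = qfact (c + Suc k)"
  have nz: "A \<noteq> 0" "B \<noteq> 0" "C \<noteq> 0" "qint (Suc c) \<noteq> (0::'a poly fract)"
     "qint (Suc k) \<noteq> (0::'a poly fract)" "qint (Suc c + Suc k) \<noteq> (0::'a poly fract)"
    unfolding A_def B_def C_def by (auto simp: qfact_nz qint_nz)
  have e1: "qfact (Suc c + Suc k) = C * qint (Suc c + Suc k)"
    unfolding C_def by (metis add_Suc qfact_Suc)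
  have e2: "qfact (Suc c) = A * qint (Suc c)" unfolding A_def by (simp add: qfact_Suc)
  have e3: "qfact (Suc k) = B * qint (Suc k)" unfolding B_def by (simp add: qfact_Suc)
  have ia: "qint (Suc c + Suc k) = qint (Suc k) + qX ^ Suc k * (qint (Suc c) :: 'a poly fract)"
    using qint_add[of "Suc k" "Suc c"] by (simp add: add.commute)
  have l: "qbinom (Suc c + Suc k) (Suc c) = C * qint (Suc c + Suc k) / (A * qint (Suc c) * (B * qint (Suc k)))"
  proof -
    have "qbinom (Suc c + Suc k) (Suc c) = qfact (Suc c + Suc k) / (qfact (Suc c) * qfact (Suc k))"
      unfolding qbinom_def by simp
    also have "\<dots> = C * qint (Suc c + Suc k) / (A * qint (Suc c) * (B * qint (Suc k)))"
      by (subst e1, subst e2, subst e3, rule refl)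
    finally show ?thesis .
  qed
  have r1: "qbinom (c + Suc k) (Suc c) = C / (A * qint (Suc c) * B)"
    by (simp add: qbinom_def C_def e2 B_def)
  have r2: "qbinom (c + Suc k) c = C / (A * (B * qint (Suc k)))"
    by (simp add: qbinom_def C_def A_def e3[symmetric])
  show ?thesis unfolding l r1 r2 ia using nz by (simp add: field_simps)
qed

definition Gs :: "nat \<Rightarrow> nat \<Rightarrow> nat list set" where
  "Gs k c = {h. length h = k \<and> sorted h \<and> (\<forall>a\<in>set h. a < c)}"

lemma Gs_finite: "finite (Gs k c)"
proof -
  have "Gs k c \<subseteq> {h. set h \<subseteq> {..<c} \<and> length h = k}" unfolding Gs_def by auto
  thus ?thesis by (rule finite_subset) (simp add: finite_lists_length_eq)
qed

lemma Gs_0: "Gs 0 c = {[]}" unfolding Gs_def by auto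

lemma Gs_1: "Gs k (Suc 0) = {replicate k 0}"
  unfolding Gs_def by (auto simp: replicate_eqI intro: sorted_replicate)

lemma Gs_rec: "Gs (Suc k) (Suc c) = Cons 0 ` Gs k (Suc c) \<union> map Suc ` Gs (Suc k) c"
proof (intro equalityI subsetI)
  fix h assume h: "h \<in> Gs (Suc k) (Suc c)"
  then obtain a t where ht: "h = a # t" unfolding Gs_def by (cases h) auto
  show "h \<in> Cons 0 ` Gs k (Suc c) \<union> map Suc ` Gs (Suc k) c"
  proof (cases "a = 0")
    case True
    then show ?thesis using h ht unfolding Gs_def by auto
  next
    case False
    have pos: "\<forall>b\<in>set h. 0 < b" using h ht False unfolding Gs_def by auto
    have "h = map Suc (map (\<lambda>b. b - 1) h)" using pos by (induction h) auto
    moreover have "map (\<lambda>b. b - 1) h \<in> Gs (Suc k) c"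
      using h pos unfolding Gs_def
      by (auto simp: sorted_iff_nth_mono intro!: diff_le_mono)
    ultimately show ?thesis by blast
  qed
next
  fix h assume "h \<in> Cons 0 ` Gs k (Suc c) \<union> map Suc ` Gs (Suc k) c"
  then show "h \<in> Gs (Suc k) (Suc c)" unfolding Gs_def
    by (auto simp: sorted_map)
qed

lemma Gs_sum: "(\<Sum>h\<in>Gs k (Suc c). qX ^ sum_list h) = (qbinom (k + c) c :: 'a::field_char_0 poly fract)"
proof (induction c arbitrary: k)
  case 0
  then show ?case by (simp add: Gs_1 qbinom_0 sum_list_replicate)
next
  case (Suc c)
  note IHc = Suc.IH
  show ?case
  proof (induction k)
    case 0
    then show ?case by (simp add: Gs_0 qbinom_diag)
  next
    case (Suc k)
    have disj: "Cons 0 ` Gs k (Suc (Suc c)) \<inter> map Suc ` Gs (Suc k) (Suc c) = {}" by auto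
    have "(\<Sum>h\<in>Gs (Suc k) (Suc (Suc c)). qX ^ sum_list h) =
       (\<Sum>h\<in>Cons 0 ` Gs k (Suc (Suc c)). qX ^ sum_list h) + (\<Sum>h\<in>map Suc ` Gs (Suc k) (Suc c). (qX::'a poly fract) ^ sum_list h)"
      unfolding Gs_rec by (rule sum.union_disjoint) (auto simp: Gs_finite)
    also have "(\<Sum>h\<in>Cons 0 ` Gs k (Suc (Suc c)). (qX::'a poly fract) ^ sum_list h) = (\<Sum>h\<in>Gs k (Suc (Suc c)). qX ^ sum_list h)"
      by (subst sum.reindex) (auto simp: inj_on_def)
    also have "(\<Sum>h\<in>map Suc ` Gs (Suc k) (Suc c). (qX::'a poly fract) ^ sum_list h) = (\<Sum>h\<in>Gs (Suc k) (Suc c). qX ^ Suc k * qX ^ sum_list h)"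
    proof (subst sum.reindex)
      show "inj_on (map Suc) (Gs (Suc k) (Suc c))" by (auto simp: inj_on_def)
      show "(\<Sum>h\<in>Gs (Suc k) (Suc c). ((\<lambda>h. (qX::'a poly fract) ^ sum_list h) \<circ> map Suc) h) = (\<Sum>h\<in>Gs (Suc k) (Suc c). qX ^ Suc k * qX ^ sum_list h)"
      proof (rule sum.cong)
        fix h assume "h \<in> Gs (Suc k) (Suc c)"
        hence "length h = Suc k" by (simp add: Gs_def)
        moreover have "sum_list (map Suc h) = length h + sum_list h" by (induction h) auto
        ultimately show "((\<lambda>h. (qX::'a poly fract) ^ sum_list h) \<circ> map Suc) h = qX ^ Suc k * qX ^ sum_list h"
          by (simp add: power_add)
      qed simp
    qed
    also have "\<dots> = qX ^ Suc k * qbinom (Suc k + c) c" using IHc[of "Suc k"] by (simp only: sum_distrib_left[symmetric])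
    finally show ?case using Suc.IH qbinom_rec[where 'a='a, of c k] by (simp add: add.commute add_Suc_right)
  qed
qed



lemma sls_strict: "sorted_wrt (<) l \<Longrightarrow> sorted_list_of_set (set l) = l"
  by (simp add: strict_sorted_iff sorted_list_of_set.idem_if_sorted_distinct)

definition cdiffs :: "nat list \<Rightarrow> nat list" where
  "cdiffs ps = map (\<lambda>(a,b). b - a) (zip (0 # ps) ps)"

lemma diffs_len[simp]: "length (cdiffs ps) = length ps"
  by (simp add: cdiffs_def)

lemma diffs_nth: "i < length ps \<Longrightarrow> cdiffs ps ! i = ps ! i - (0 # ps) ! i"
  by (simp add: cdiffs_def)

lemma strict_nth_less: "sorted_wrt (<) ps \<Longrightarrow> i < j \<Longrightarrow> j < length ps \<Longrightarrow> ps ! i < ps ! j"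
  by (simp add: sorted_wrt_iff_nth_less)

lemma cons_le: "sorted_wrt (<) (ps::nat list) \<Longrightarrow> i < length ps \<Longrightarrow> (0 # ps) ! i \<le> ps ! i"
proof (cases i)
  case (Suc i')
  assume "sorted_wrt (<) ps" "i < length ps"
  then show ?thesis using strict_nth_less[of ps i' i] Suc by (simp add: le_less)
qed simp

lemma diffs_take: "sorted_wrt (<) ps \<Longrightarrow> j \<le> length ps \<Longrightarrow> sum_list (take j (cdiffs ps)) = (0 # ps) ! j"
proof (induction j)
  case 0 then show ?case by simp
next
  case (Suc j)
  have "sum_list (take (Suc j) (cdiffs ps)) = sum_list (take j (cdiffs ps)) + cdiffs ps ! j"
    using Suc.prems by (simp add: take_Suc_conv_app_nth)
  also have "\<dots> = (0 # ps) ! j + (ps ! j - (0 # ps) ! j)" using Suc by (simp add: diffs_nth)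
  also have "\<dots> = ps ! j" using cons_le[OF Suc.prems(1), of j] Suc.prems by simp
  finally show ?case by simp
qed

lemma diffs_pos: "sorted_wrt (<) ps \<Longrightarrow> (\<forall>x\<in>set ps. 0 < x) \<Longrightarrow> is_comp (cdiffs ps)"
  unfolding is_comp_def
proof
  fix x assume s: "sorted_wrt (<) ps" and p: "\<forall>x\<in>set ps. 0 < x" and "x \<in> set (cdiffs ps)"
  then obtain i where i: "i < length ps" "x = cdiffs ps ! i" by (auto simp: in_set_conv_nth)
  show "0 < x"
  proof (cases i)
    case 0 then show ?thesis using i p by (auto simp: diffs_nth)
  next
    case (Suc i') then show ?thesis using i strict_nth_less[OF s, of i' i] by (simp add: diffs_nth)
  qed
qed

lemma Des_diffs: "sorted_wrt (<) ps \<Longrightarrow> Des (cdiffs ps) = set (butlast ps)"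
proof -
  assume s: "sorted_wrt (<) ps"
  have "Des (cdiffs ps) = {ps ! j | j. j < length ps - 1}"
  proof (intro equalityI subsetI)
    fix x assume "x \<in> Des (cdiffs ps)"
    then obtain j where j: "0 < j" "j < length ps" "x = sum_list (take j (cdiffs ps))"
      unfolding Des_def by auto
    then obtain j' where "j = Suc j'" by (cases j) auto
    with j diffs_take[OF s, of j] show "x \<in> {ps ! j | j. j < length ps - 1}" by auto
  next
    fix x assume "x \<in> {ps ! j | j. j < length ps - 1}"
    then obtain j where j: "j < length ps - 1" "x = ps ! j" by auto
    hence "x = sum_list (take (Suc j) (cdiffs ps))" using diffs_take[OF s, of "Suc j"] by simp
    with j show "x \<in> Des (cdiffs ps)" unfolding Des_def by (auto intro!: exI[of _ "Suc j"])
  qed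
  also have "\<dots> = set (butlast ps)"
  proof (intro equalityI subsetI)
    fix x assume "x \<in> {ps ! j | j. j < length ps - 1}"
    then obtain j where "j < length ps - 1" "x = ps ! j" by auto
    then show "x \<in> set (butlast ps)" unfolding in_set_conv_nth by (intro exI[of _ j]) (simp add: nth_butlast)
  next
    fix x assume "x \<in> set (butlast ps)"
    then obtain j where "j < length ps - 1" "x = butlast ps ! j" by (auto simp: in_set_conv_nth)
    then show "x \<in> {ps ! j | j. j < length ps - 1}" by (auto simp: nth_butlast)
  qed
  finally show ?thesis .
qed

lemma comp_of_diffs:
  assumes "1 \<le> N"
  shows "comp_of N D = cdiffs (sorted_list_of_set {p\<in>D. 0 < p \<and> p < N} @ [N])"
proof -
  let ?E = "{p\<in>D. 0 < p \<and> p < N}"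
  have fin: "finite ?E" by (rule finite_subset[of _ "{..<N}"]) auto
  have "sorted_wrt (<) (sorted_list_of_set ?E @ [N])"
    using fin by (auto simp: sorted_wrt_append strict_sorted_list_of_set)
  moreover have "set (sorted_list_of_set ?E @ [N]) = ?E \<union> {N}" using fin by auto
  ultimately have "sorted_list_of_set (?E \<union> {N}) = sorted_list_of_set ?E @ [N]"
    by (metis sls_strict)
  thus ?thesis unfolding comp_of_def cdiffs_def Let_def by simp
qed

lemma comp_of_props:
  assumes "1 \<le> N"
  shows "Des (comp_of N D) = {p\<in>D. 0 < p \<and> p < N}"
    and "length (comp_of N D) = card {p\<in>D. 0 < p \<and> p < N} + 1"
    and "is_comp (comp_of N D)"
    and "sum_list (comp_of N D) = N"
proof -
  let ?E = "{p\<in>D. 0 < p \<and> p < N}"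
  let ?ps = "sorted_list_of_set ?E @ [N]"
  have fin: "finite ?E" by (rule finite_subset[of _ "{..<N}"]) auto
  have s: "sorted_wrt (<) ?ps"
    using fin by (auto simp: sorted_wrt_append strict_sorted_list_of_set)
  show "Des (comp_of N D) = ?E" unfolding comp_of_diffs[OF assms] Des_diffs[OF s] using fin by simp
  show "length (comp_of N D) = card ?E + 1" unfolding comp_of_diffs[OF assms] by simp
  show "is_comp (comp_of N D)" unfolding comp_of_diffs[OF assms]
    by (rule diffs_pos[OF s]) (use fin assms in auto)
  have "sum_list (cdiffs ?ps) = sum_list (take (length ?ps) (cdiffs ?ps))" by simp
  also have "\<dots> = (0 # ?ps) ! length ?ps" by (rule diffs_take[OF s]) simp
  also have "\<dots> = N" by (simp add: nth_append)
  finally show "sum_list (comp_of N D) = N" unfolding comp_of_diffs[OF assms] .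
qed

definition psums :: "nat list \<Rightarrow> nat list" where
  "psums I = map (\<lambda>j. sum_list (take j I)) [1..<length I]"

lemma psum_mono:
  assumes c: "is_comp I" and that: "i < j" "j \<le> length I"
  shows "sum_list (take i I) < sum_list (take j I)"
proof -
  have "take j I = take i I @ drop i (take j I)"
    by (metis append_take_drop_id take_take min_absorb1 less_imp_le that(1))
  moreover have "drop i (take j I) \<noteq> []" using that by simp
  moreover have "\<forall>x\<in>set (drop i (take j I)). 0 < x" using c unfolding is_comp_def
    by (meson in_set_dropD in_set_takeD)
  moreover have "\<And>l::nat list. l \<noteq> [] \<Longrightarrow> (\<forall>x\<in>set l. 0 < x) \<Longrightarrow> 0 < sum_list l"
    subgoal for l by (cases l) auto done
  ultimately show ?thesis by (metis sum_list_append less_add_same_cancel1)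
qed

lemma psums_nth: "i < length I \<Longrightarrow> (psums I @ [sum_list I]) ! i = sum_list (take (Suc i) I)"
  by (cases "Suc i = length I") (auto simp: psums_def nth_append)

lemma psums_strict: "is_comp I \<Longrightarrow> sorted_wrt (<) (psums I @ [sum_list I])"
proof -
  assume c: "is_comp I"
  have len: "length (psums I @ [sum_list I]) = max 1 (length I)" by (simp add: psums_def)
  show ?thesis
  proof (cases "I = []")
    case True then show ?thesis by (simp add: psums_def)
  next
    case False
    show ?thesis unfolding sorted_wrt_iff_nth_less len
    proof (intro allI impI)
      fix i j assume "i < j" "j < max 1 (length I)"
      then show "(psums I @ [sum_list I]) ! i < (psums I @ [sum_list I]) ! j"
        using False by (simp add: psums_nth psum_mono[OF c])
    qed
  qed
qed

lemma Des_psums: "Des I = set (psums I)"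
  unfolding Des_def psums_def by (auto simp: image_iff)

lemma card_Des: "is_comp I \<Longrightarrow> card (Des I) = length I - 1"
proof -
  assume c: "is_comp I"
  have "distinct (psums I)" using psums_strict[OF c] by (simp add: strict_sorted_iff sorted_wrt_append)
  hence "card (set (psums I)) = length (psums I)" by (rule distinct_card)
  thus ?thesis by (simp add: Des_psums psums_def)
qed

lemma Des_bounds: "is_comp I \<Longrightarrow> p \<in> Des I \<Longrightarrow> 0 < p \<and> p < sum_list I"
proof -
  assume c: "is_comp I" and "p \<in> Des I"
  then obtain j where j: "0 < j" "j < length I" "p = sum_list (take j I)" unfolding Des_def by auto
  have "sum_list (take 0 I) < p" using psum_mono[OF c, of 0 j] j by simp
  moreover have "p < sum_list (take (length I) I)" using psum_mono[OF c, of j "length I"] j by simp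
  ultimately show ?thesis by simp
qed

lemma comp_of_Des:
  assumes c: "is_comp I" and N: "sum_list I = N" "1 \<le> N"
  shows "comp_of N (Des I) = I"
proof -
  have ne: "I \<noteq> []" using N by auto
  have st: "sorted_wrt (<) (psums I @ [N])" using psums_strict[OF c] N by simp
  hence st': "sorted_wrt (<) (psums I)" by (simp add: sorted_wrt_append)
  have "{p\<in>Des I. 0 < p \<and> p < N} = set (psums I)"
    using Des_bounds[OF c] N by (auto simp: Des_psums)
  hence eq: "comp_of N (Des I) = cdiffs (psums I @ [N])"
    unfolding comp_of_diffs[OF N(2)] using sls_strict[OF st'] by simp
  have len: "length (psums I @ [N]) = length I" using ne by (simp add: psums_def)
  show ?thesis unfolding eq
  proof (rule nth_equalityI)
    show "length (cdiffs (psums I @ [N])) = length I" using len by simp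
    fix i assume "i < length (cdiffs (psums I @ [N]))"
    hence i: "i < length I" using len by simp
    have a: "(psums I @ [N]) ! i = sum_list (take (Suc i) I)" using psums_nth[OF i] N by simp
    have b: "(0 # psums I @ [N]) ! i = sum_list (take i I)"
    proof (cases i)
      case (Suc i') then show ?thesis using psums_nth[of i' I] i N by simp
    qed simp
    show "cdiffs (psums I @ [N]) ! i = I ! i"
      using i len by (simp add: diffs_nth a b take_Suc_conv_app_nth)
  qed
qed



lemma pack_len[simp]: "length (pack w) = length w" by (simp add: pack_def)

lemma pack_nth: "i < length w \<Longrightarrow> pack w ! i = card {y\<in>set w. y \<le> w ! i}"
  by (simp add: pack_def)

lemma cnt_mono_le: "finite A \<Longrightarrow> a \<le> b \<Longrightarrow> card {y\<in>A. y \<le> a} \<le> card {y\<in>A. y \<le> (b::nat)}"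
  by (rule card_mono) auto

lemma cnt_strict: "finite A \<Longrightarrow> b \<in> A \<Longrightarrow> a < b \<Longrightarrow> card {y\<in>A. y \<le> a} < card {y\<in>A. y \<le> (b::nat)}"
proof -
  assume f: "finite A" and b: "b \<in> A" and ab: "a < b"
  have "b \<in> {y\<in>A. y \<le> b}" "b \<notin> {y\<in>A. y \<le> a}" using b ab by auto
  moreover have "{y\<in>A. y \<le> a} \<subseteq> {y\<in>A. y \<le> b}" using ab by auto
  ultimately have "{y\<in>A. y \<le> a} \<subset> {y\<in>A. y \<le> b}" by blast
  thus ?thesis using f by (intro psubset_card_mono) auto
qed

lemma pack_le_iff: "i < length w \<Longrightarrow> j < length w \<Longrightarrow> (pack w ! i \<le> pack w ! j) = (w ! i \<le> w ! j)"
proof -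
  assume i: "i < length w" and j: "j < length w"
  show ?thesis
  proof (cases "w ! i \<le> w ! j")
    case True then show ?thesis using cnt_mono_le[of "set w" "w!i" "w!j"] i j by (simp add: pack_nth)
  next
    case False
    then have "card {y\<in>set w. y \<le> w ! j} < card {y\<in>set w. y \<le> w ! i}"
      using i by (intro cnt_strict) auto
    then show ?thesis using False i j by (simp add: pack_nth)
  qed
qed

definition oiso :: "nat list \<Rightarrow> nat list \<Rightarrow> bool" where
  "oiso w z \<longleftrightarrow> length w = length z \<and> (\<forall>i<length w. \<forall>j<length w. (w ! i \<le> w ! j) = (z ! i \<le> z ! j))"

lemma oiso_pack: "oiso (pack w) w" unfolding oiso_def by (simp add: pack_le_iff)

lemma oiso_sym: "oiso w z \<Longrightarrow> oiso z w" unfolding oiso_def by auto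
lemma oiso_trans: "oiso w z \<Longrightarrow> oiso z t \<Longrightarrow> oiso w t" unfolding oiso_def by auto

lemma oiso_eq: "oiso w z \<Longrightarrow> i < length w \<Longrightarrow> j < length w \<Longrightarrow> (w ! i = w ! j) = (z ! i = z ! j)"
  unfolding oiso_def by (metis order.eq_iff)

lemma oiso_less: "oiso w z \<Longrightarrow> i < length w \<Longrightarrow> j < length w \<Longrightarrow> (w ! i < w ! j) = (z ! i < z ! j)"
  unfolding oiso_def by (metis not_le)

lemma oiso_drop: "oiso w z \<Longrightarrow> oiso (drop k w) (drop k z)"
  unfolding oiso_def by auto

lemma oiso_take: "oiso w z \<Longrightarrow> oiso (take k w) (take k z)"
  unfolding oiso_def by auto

lemma card_first_occ:
  "card {b\<in>set ys. P b} = card {j. j < length ys \<and> P (ys ! j) \<and> (\<forall>l<j. ys ! l \<noteq> ys ! j)}"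
proof -
  let ?F = "{j. j < length ys \<and> P (ys ! j) \<and> (\<forall>l<j. ys ! l \<noteq> ys ! j)}"
  have "bij_betw (\<lambda>j. ys ! j) ?F {b\<in>set ys. P b}"
  proof (rule bij_betwI')
    fix x y assume "x \<in> ?F" "y \<in> ?F"
    then show "(ys ! x = ys ! y) = (x = y)" by (metis (mono_tags, lifting) mem_Collect_eq nat_neq_iff)
  next
    fix x assume "x \<in> ?F" then show "ys ! x \<in> {b\<in>set ys. P b}" by auto
  next
    fix b assume b: "b \<in> {b\<in>set ys. P b}"
    then obtain j where j: "j < length ys" "ys ! j = b" by (auto simp: in_set_conv_nth)
    define j0 where "j0 = (LEAST j. j < length ys \<and> ys ! j = b)"
    have j0: "j0 < length ys \<and> ys ! j0 = b" unfolding j0_def by (rule LeastI[of _ j]) (use j in auto)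
    have "\<forall>l<j0. ys ! l \<noteq> ys ! j0"
    proof (intro allI impI)
      fix l assume "l < j0"
      then show "ys ! l \<noteq> ys ! j0" using not_less_Least[of l "\<lambda>j. j < length ys \<and> ys ! j = b"] j0
        unfolding j0_def by auto
    qed
    then show "\<exists>x\<in>?F. b = ys ! x" using j0 b by (intro bexI[of _ j0]) auto
  qed
  thus ?thesis by (simp add: bij_betw_same_card)
qed

lemma pack_nth_fo: "i < length w \<Longrightarrow> pack w ! i = card {j. j < length w \<and> w ! j \<le> w ! i \<and> (\<forall>l<j. w ! l \<noteq> w ! j)}"
  by (simp add: pack_nth card_first_occ)

lemma oiso_pack_eq: "oiso w z \<Longrightarrow> pack w = pack z"
proof (rule nth_equalityI)
  assume o: "oiso w z"
  then show "length (pack w) = length (pack z)" by (simp add: oiso_def)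
  fix i assume "i < length (pack w)"
  hence i: "i < length w" by simp
  have "{j. j < length w \<and> w ! j \<le> w ! i \<and> (\<forall>l<j. w ! l \<noteq> w ! j)}
      = {j. j < length z \<and> z ! j \<le> z ! i \<and> (\<forall>l<j. z ! l \<noteq> z ! j)}"
  proof (intro Collect_cong)
    fix j
    show "(j < length w \<and> w ! j \<le> w ! i \<and> (\<forall>l<j. w ! l \<noteq> w ! j)) =
          (j < length z \<and> z ! j \<le> z ! i \<and> (\<forall>l<j. z ! l \<noteq> z ! j))"
    proof (cases "j < length w")
      case True
      have "\<forall>l<j. (w ! l = w ! j) = (z ! l = z ! j)" using oiso_eq[OF o] True by auto
      then show ?thesis using True o i unfolding oiso_def by auto
    next
      case False then show ?thesis using o by (simp add: oiso_def)
    qed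
  qed
  thus "pack w ! i = pack z ! i" using i o by (simp add: pack_nth_fo oiso_def)
qed

lemma rank_bij: "finite (A::nat set) \<Longrightarrow> (\<lambda>x. card {y\<in>A. y \<le> x}) ` A = {1..card A}"
proof -
  assume fin: "finite A"
  let ?f = "\<lambda>x. card {y\<in>A. y \<le> x}"
  have inj: "inj_on ?f A"
  proof (rule inj_onI)
    fix a b assume "a \<in> A" "b \<in> A" "?f a = ?f b"
    then show "a = b" using cnt_strict[OF fin, of a b] cnt_strict[OF fin, of b a]
      by (metis less_irrefl nat_neq_iff)
  qed
  have sub: "?f ` A \<subseteq> {1..card A}"
  proof
    fix x assume "x \<in> ?f ` A"
    then obtain a where a: "a \<in> A" "x = ?f a" by auto
    have "0 < ?f a" using a fin by (subst card_gt_0_iff) auto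
    moreover have "?f a \<le> card A" using fin by (intro card_mono) auto
    ultimately show "x \<in> {1..card A}" using a by auto
  qed
  have "card (?f ` A) = card {1..card A}" using card_image[OF inj] by simp
  thus ?thesis by (rule card_subset_eq[OF finite_atLeastAtMost sub])
qed

lemma set_pack: "set (pack w) = {1..card (set w)}"
  using rank_bij[of "set w"] by (simp add: pack_def)

lemma packed_pack: "packed (pack w)"
  unfolding packed_def set_pack by simp

lemma card_set_pack: "card (set (pack w)) = card (set w)"
  by (simp add: set_pack)

lemma packed_pack_id: "packed w \<Longrightarrow> pack w = w"
proof (rule nth_equalityI)
  assume p: "packed w"
  show "length (pack w) = length w" by simp
  fix i assume "i < length (pack w)"
  hence i: "i < length w" by simp
  obtain M where M: "set w = {1..M}" using p unfolding packed_def by blast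
  have wi: "w ! i \<in> {1..M}" using M i by (metis nth_mem)
  have "{y\<in>set w. y \<le> w ! i} = {1..w ! i}" using M wi by auto
  thus "pack w ! i = w ! i" using i wi by (simp add: pack_nth)
qed

lemma sorted_oiso: "oiso w z \<Longrightarrow> sorted w = sorted z"
  unfolding oiso_def sorted_iff_nth_mono by auto

lemma in_set_drop_nth: "x \<in> set (drop p w) \<longleftrightarrow> (\<exists>j. p \<le> j \<and> j < length w \<and> w ! j = x)"
proof
  assume "x \<in> set (drop p w)"
  then obtain i where "i < length (drop p w)" "drop p w ! i = x" by (auto simp: in_set_conv_nth)
  then show "\<exists>j. p \<le> j \<and> j < length w \<and> w ! j = x" by (intro exI[of _ "p+i"]) auto
next
  assume "\<exists>j. p \<le> j \<and> j < length w \<and> w ! j = x"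
  then obtain j where "p \<le> j" "j < length w" "w ! j = x" by auto
  then show "x \<in> set (drop p w)" unfolding in_set_conv_nth by (intro exI[of _ "j - p"]) auto
qed

lemma wdes_alt: "wdes w = {p. 1 \<le> p \<and> p < length w \<and> (\<forall>j. p \<le> j \<and> j < length w \<longrightarrow> w ! j \<noteq> w ! (p - 1))}"
  unfolding wdes_def in_set_drop_nth by blast

lemma wdes_oiso: "oiso w z \<Longrightarrow> wdes w = wdes z"
proof -
  assume o: "oiso w z"
  have l: "length w = length z" using o by (simp add: oiso_def)
  show ?thesis unfolding wdes_alt l
  proof (intro Collect_cong conj_cong refl)
    fix p assume "1 \<le> p" "p < length z"
    then show "(\<forall>j. p \<le> j \<and> j < length z \<longrightarrow> w ! j \<noteq> w ! (p - 1)) =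
               (\<forall>j. p \<le> j \<and> j < length z \<longrightarrow> z ! j \<noteq> z ! (p - 1))"
      using oiso_eq[OF o] l by auto
  qed
qed

lemma sinv_sorted: "sorted w \<Longrightarrow> sinv w = 0"
proof -
  assume s: "sorted w"
  have e: "{(i, j). i < j \<and> j < length w \<and> w ! i > w ! j \<and> w ! j \<notin> set (drop (Suc j) w)} = {}"
    using s by (auto simp: sorted_iff_nth_mono leD)
  show ?thesis unfolding sinv_def e by simp
qed



lemma nondec_word_snoc: "nondec_word (J @ [x]) = nondec_word J @ replicate x (Suc (length J))"
  unfolding nondec_word_def by simp (rule arg_cong[of _ _ concat], rule map_cong, auto simp: nth_append)

lemma nondec_word_len: "length (nondec_word J) = sum_list J"
proof (induction J rule: rev_induct)
  case Nil then show ?case by (simp add: nondec_word_def)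
next
  case (snoc x J) then show ?case by (simp add: nondec_word_snoc)
qed

lemma Des_snoc: "Des (J @ [x]) = (if J = [] then {} else insert (sum_list J) (Des J))"
proof -
  have t: "\<And>j. j < Suc (length J) \<Longrightarrow> take j (J @ [x]) = take j J" by simp
  have "Des (J @ [x]) = {sum_list (take j J) | j. 0 < j \<and> j < Suc (length J)}"
  proof (rule set_eqI)
    fix y
    show "y \<in> Des (J @ [x]) \<longleftrightarrow> y \<in> {sum_list (take j J) | j. 0 < j \<and> j < Suc (length J)}"
      unfolding Des_def using t apply auto apply (rule_tac x=j in exI) apply simp done
  qed
  also have "\<dots> = (if J = [] then {} else insert (sum_list J) (Des J))"
  proof (cases "J = []")
    case False
    have "sum_list J \<in> {sum_list (take j J) | j. 0 < j \<and> j < Suc (length J)}"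
      using False by (intro CollectI exI[of _ "length J"]) auto
    then show ?thesis using False unfolding Des_def by (auto simp: less_Suc_eq)
  qed simp
  finally show ?thesis .
qed

lemma Des_single[simp]: "Des [x] = {}" by (simp add: Des_def)

lemma nondec_word_nth:
  assumes "is_comp J" "a < sum_list J"
  shows "nondec_word J ! a = Suc (card {d\<in>Des J. d \<le> a})"
  using assms
proof (induction J arbitrary: a rule: rev_induct)
  case Nil then show ?case by simp
next
  case (snoc x J)
  have cJ: "is_comp J" using snoc.prems by (simp add: is_comp_def)
  show ?case
  proof (cases "a < sum_list J")
    case True
    have "{d\<in>Des (J @ [x]). d \<le> a} = {d\<in>Des J. d \<le> a}" using True by (auto simp: Des_snoc)
    then show ?thesis using snoc.IH[OF cJ True] True
      by (simp add: nondec_word_snoc nth_append nondec_word_len)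
  next
    case False
    have v: "nondec_word (J @ [x]) ! a = Suc (length J)"
      using False snoc.prems by (simp add: nondec_word_snoc nth_append nondec_word_len)
    show ?thesis
    proof (cases "J = []")
      case True then show ?thesis using v by (simp add: Des_snoc)
    next
      case ne: False
      have "\<forall>d\<in>Des J. d \<le> a" using False Des_bounds[OF cJ] by (meson less_imp_le not_less order.strict_trans2)
      hence "{d\<in>Des (J @ [x]). d \<le> a} = insert (sum_list J) (Des J)"
        using False ne by (auto simp: Des_snoc)
      moreover have "sum_list J \<notin> Des J" using Des_bounds[OF cJ] by auto
      moreover have "finite (Des J)" by (simp add: Des_psums)
      ultimately have "card {d\<in>Des (J @ [x]). d \<le> a} = length J"
        using card_Des[OF cJ] ne by simp
      then show ?thesis using v by simp
    qed
  qed
qed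

lemma nondec_word_set: "is_comp J \<Longrightarrow> set (nondec_word J) = {1..length J}"
proof -
  assume c: "is_comp J"
  have "set (nondec_word J) = (\<Union>j\<in>{0..<length J}. set (replicate (J!j) (Suc j)))"
    by (simp add: nondec_word_def)
  also have "\<dots> = (\<Union>j\<in>{0..<length J}. {Suc j})"
    using c unfolding is_comp_def by (intro SUP_cong refl) (auto simp: set_replicate_conv_if)
  also have "\<dots> = {1..length J}"
  proof (intro equalityI subsetI)
    fix y assume "y \<in> {1..length J}"
    then show "y \<in> (\<Union>j\<in>{0..<length J}. {Suc j})" by (intro UN_I[of "y - 1"]) auto
  qed auto
  finally show ?thesis .
qed

lemma nondec_word_sorted: "is_comp J \<Longrightarrow> sorted (nondec_word J)"
proof -
  assume c: "is_comp J"
  show ?thesis unfolding sorted_iff_nth_mono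
  proof (intro allI impI)
    fix i j assume "i \<le> j" "j < length (nondec_word J)"
    moreover have "{d\<in>Des J. d \<le> i} \<subseteq> {d\<in>Des J. d \<le> j}" using \<open>i \<le> j\<close> by auto
    moreover have "finite (Des J)" by (simp add: Des_psums)
    ultimately show "nondec_word J ! i \<le> nondec_word J ! j"
      using c by (simp add: nondec_word_nth nondec_word_len card_mono)
  qed
qed

lemma nondec_word_bound:
  assumes "is_comp J" "0 < a" "a < sum_list J"
  shows "(nondec_word J ! (a - 1) \<noteq> nondec_word J ! a) = (a \<in> Des J)"
proof -
  have f: "finite (Des J)" by (simp add: Des_psums)
  have e1: "{d\<in>Des J. d \<le> a - Suc 0} = {d\<in>Des J. d < a}" using assms(2) by auto
  have "{d\<in>Des J. d \<le> a} = (if a \<in> Des J then insert a {d\<in>Des J. d < a} else {d\<in>Des J. d < a})"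
    by (auto simp: le_less)
  then show ?thesis using assms f by (simp add: nondec_word_nth e1)
qed



lemma ARa: "c < (K::nat) \<Longrightarrow> g \<le> b \<Longrightarrow> 2*g*K + c < (2*b+1)*K"
proof -
  assume c: "c < K" and gb: "g \<le> b"
  have "2*g*K \<le> 2*b*K" using gb by simp
  moreover have "(2*b+1)*K = 2*b*K + K" by (simp add: algebra_simps)
  ultimately show ?thesis using c by linarith
qed

lemma ARb': "b < (g::nat) \<Longrightarrow> 0 < K \<Longrightarrow> (2*b+1)*K < 2*g*K"
proof -
  assume gb: "b < g" and K: "0 < K"
  have "2*(b+1)*K \<le> 2*g*K" using gb by (intro mult_le_mono1) simp
  moreover have "(2*b+1)*K < 2*(b+1)*K" using K by simp
  ultimately show ?thesis by linarith
qed

lemma AR1: assumes c: "c < (K::nat)" shows "(2*g*K + c \<le> (2*b+1)*K) = (g \<le> b)"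
proof (cases "g \<le> b")
  case True
  with ARa[OF c True] show ?thesis by simp
next
  case False
  have "(2*b+1)*K < 2*g*K" using False c by (intro ARb') auto
  then show ?thesis using False by linarith
qed

lemma AR2: assumes c: "c < (K::nat)" shows "((2*b+1)*K \<le> 2*g*K + c) = (b < g)"
proof (cases "g \<le> b")
  case True
  with ARa[OF c True] show ?thesis by simp
next
  case False
  have "(2*b+1)*K < 2*g*K" using False c by (intro ARb') auto
  then show ?thesis using False by linarith
qed

lemma AR2': assumes c: "c < (K::nat)" shows "((2*b+1)*K < 2*g*K + c) = (b < g)"
proof (cases "g \<le> b")
  case True
  with ARa[OF c True] show ?thesis by simp
next
  case False
  have "(2*b+1)*K < 2*g*K" using False c by (intro ARb') auto
  then show ?thesis using False by linarith
qed

lemma AR3: "0 < (K::nat) \<Longrightarrow> ((2*a+1)*K \<le> (2*b+1)*K) = (a \<le> b)"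
  by simp

lemma AR3': "0 < (K::nat) \<Longrightarrow> ((2*a+1)*K < (2*b+1)*K) = (a < b)"
  by simp

lemma AR4: "c < (K::nat) \<Longrightarrow> c' < K \<Longrightarrow> (2*a*K + c \<le> 2*b*K + c') = (a < b \<or> (a = b \<and> c \<le> c'))"
proof -
  assume c: "c < K" and c': "c' < K"
  show ?thesis
  proof (cases "a < b")
    case True
    have "2*(a+1)*K \<le> 2*b*K" using True by (intro mult_le_mono1) simp
    hence "2*a*K + K \<le> 2*b*K" by (simp add: algebra_simps)
    then show ?thesis using True c by linarith
  next
    case False
    show ?thesis
    proof (cases "a = b")
      case True then show ?thesis by simp
    next
      case nb: False
      hence "b < a" using False by simp
      have "2*(b+1)*K \<le> 2*a*K" using \<open>b < a\<close> by (intro mult_le_mono1) simp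
      hence "2*b*K + K \<le> 2*a*K" by (simp add: algebra_simps)
      then show ?thesis using False nb c' by linarith
    qed
  qed
qed

lemma AR5: assumes "c < (K::nat)" shows "2*a*K + c \<noteq> (2*b+1)*K"
proof (cases "a \<le> b")
  case True then show ?thesis using ARa[OF assms True] by simp
next
  case False then show ?thesis using ARb'[of b a K] assms by simp
qed

definition cnt :: "nat set \<Rightarrow> nat \<Rightarrow> nat" where
  "cnt Y a = card {b\<in>Y. b < a}"

lemma cnt_mono: "finite Y \<Longrightarrow> a \<le> a' \<Longrightarrow> cnt Y a \<le> cnt Y a'"
  unfolding cnt_def by (rule card_mono) auto

lemma cntY_strict: "finite Y \<Longrightarrow> a \<in> Y \<Longrightarrow> a < a' \<Longrightarrow> cnt Y a < cnt Y a'"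
proof -
  assume f: "finite Y" and a: "a \<in> Y" and aa: "a < a'"
  have "{b\<in>Y. b < a} \<subset> {b\<in>Y. b < a'}" using a aa by auto
  thus ?thesis unfolding cnt_def using f by (intro psubset_card_mono) auto
qed

lemma cnt_le_card: "finite Y \<Longrightarrow> cnt Y a \<le> card Y"
  unfolding cnt_def by (rule card_mono) auto

lemma cnt_lt_card: "finite Y \<Longrightarrow> a \<in> Y \<Longrightarrow> cnt Y a < card Y"
  unfolding cnt_def by (rule psubset_card_mono) auto

lemma C1: "finite Y \<Longrightarrow> a \<in> Y \<Longrightarrow> (a' \<le> a) = (cnt Y a' \<le> cnt Y a)"
  by (metis cnt_mono cntY_strict not_le)

lemma C2: "finite Y \<Longrightarrow> a \<in> Y \<Longrightarrow> (a \<le> a') = (if a' \<in> Y then cnt Y a \<le> cnt Y a' else cnt Y a < cnt Y a')"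
  by (metis C1 cnt_mono cntY_strict le_less not_le)

lemma C3: "finite Y \<Longrightarrow> a \<in> Y \<Longrightarrow> a' \<in> Y \<Longrightarrow> (a = a') = (cnt Y a = cnt Y a')"
  by (metis C1 order.antisym order_refl)



locale stp =
  fixes k n :: nat and I :: "nat list"
  assumes k1: "1 \<le> k" and n1: "1 \<le> n" and cI: "is_comp I" and sI: "sum_list I = k + n"
begin

definition "DY = {a. 1 \<le> a \<and> k + a \<in> Des I}"
definition "I' = comp_of n DY"
definition "v = nondec_word I'"
definition "m = length I'"
definition "DX = {i. i < k \<and> Suc i \<in> Des I}"
definition "KK = k + 1"

lemma DesI_bounds: "p \<in> Des I \<Longrightarrow> 0 < p \<and> p < k + n"
  using Des_bounds[OF cI] sI by simp

lemma DY_sub: "DY \<subseteq> {0<..<n}"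
  unfolding DY_def using DesI_bounds by force

lemma DY_fin: "finite DY" using DY_sub finite_subset by blast

lemma DY_eq: "{p\<in>DY. 0 < p \<and> p < n} = DY" using DY_sub by auto

lemma I'_props: "Des I' = DY" "m = card DY + 1" "is_comp I'" "sum_list I' = n"
  using comp_of_props[OF n1, of DY] unfolding I'_def m_def DY_eq by auto

lemma m_pos: "1 \<le> m" using I'_props by simp

lemma v_len: "length v = n" unfolding v_def using nondec_word_len I'_props by simp

lemma v_set: "set v = {1..m}" unfolding v_def m_def using nondec_word_set I'_props by simp

lemma v_sorted: "sorted v" unfolding v_def using nondec_word_sorted I'_props by simp

lemma v_packed: "packed v" unfolding packed_def v_set by simp

lemma v_bound: "0 < a \<Longrightarrow> a < n \<Longrightarrow> (v ! (a - 1) \<noteq> v ! a) = (a \<in> DY)"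
  unfolding v_def using nondec_word_bound[of I' a] I'_props by simp

lemma v_pos: "a < n \<Longrightarrow> 1 \<le> v ! a \<and> v ! a \<le> m"
  using v_set v_len by (metis atLeastAtMost_iff nth_mem)

lemma DX_sub: "DX \<subseteq> {..<k}" unfolding DX_def by auto
lemma DX_fin: "finite DX" using DX_sub finite_subset by blast

lemma cardDX_lt: "card {d\<in>DX. d < i} < KK" if "i \<le> k"
proof -
  have "card {d\<in>DX. d < i} \<le> card {..<i}" by (rule card_mono) auto
  thus ?thesis using that unfolding KK_def by simp
qed

lemma delta_iff: "(k \<in> Des I) = (k - 1 \<in> DX)"
  unfolding DX_def using k1 by (auto simp: Suc_diff_1)

definition KEY :: "nat list \<Rightarrow> nat \<Rightarrow> nat" where
  "KEY h i = (if k \<le> i then (2 * (v ! (i - k) - 1) + 1) * KK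
              else if (\<exists>d\<in>DX. i \<le> d \<and> h ! d = h ! i) then 2 * (h ! i) * KK + card {d\<in>DX. d < i}
              else (2 * (h ! i) + 1) * KK)"

definition "nw h i \<longleftrightarrow> (\<exists>d\<in>DX. i \<le> d \<and> h ! d = h ! i)"

definition "keys h = map (KEY h) [0..<k+n]"

definition "S = {u. packed u \<and> length u = k + n \<and> wdes u = Des I \<and> sorted (take k u) \<and> pack (drop k u) = v}"

definition "gmap u = map (\<lambda>a. cnt (set (drop k u)) a) (take k u)"

lemma KEY_x_new: "i < k \<Longrightarrow> nw h i \<Longrightarrow> KEY h i = 2 * (h ! i) * KK + card {d\<in>DX. d < i}"
  unfolding KEY_def nw_def by auto

lemma KEY_x_old: "i < k \<Longrightarrow> \<not> nw h i \<Longrightarrow> KEY h i = (2 * (h ! i) + 1) * KK"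
  unfolding KEY_def nw_def by auto

lemma KEY_y: "k \<le> i \<Longrightarrow> KEY h i = (2 * (v ! (i - k) - 1) + 1) * KK"
  unfolding KEY_def by auto

lemma KK_pos: "0 < KK" unfolding KK_def by simp

lemma KEY_mono:
  assumes h: "sorted h" "length h = k" and ij: "i \<le> j" "j < k"
  shows "KEY h i \<le> KEY h j"
proof -
  have hij: "h ! i \<le> h ! j" using h ij by (simp add: sorted_iff_nth_mono)
  have ci: "card {d\<in>DX. d < i} < KK" and cj: "card {d\<in>DX. d < j} < KK" using ij by (auto intro: cardDX_lt)
  have cij: "card {d\<in>DX. d < i} \<le> card {d\<in>DX. d < j}" using ij DX_fin by (intro card_mono) auto
  show ?thesis
  proof (cases "h ! i < h ! j")
    case True
    have a: "KEY h i \<le> (2 * (h ! i) + 1) * KK"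
      using ij ci by (cases "nw h i") (auto simp: KEY_x_new KEY_x_old intro: less_imp_le ARa)
    have b: "2 * (h ! j) * KK \<le> KEY h j"
      using ij by (cases "nw h j") (auto simp: KEY_x_new KEY_x_old)
    have "(2 * (h ! i) + 1) * KK \<le> 2 * (h ! j) * KK" using True KK_pos by (intro less_imp_le ARb') auto
    then show ?thesis using a b by linarith
  next
    case False
    hence eq: "h ! i = h ! j" using hij by simp
    show ?thesis
    proof (cases "nw h i")
      case True
      then obtain d where d: "d \<in> DX" "i \<le> d" "h ! d = h ! i" unfolding nw_def by auto
      show ?thesis
      proof (cases "j \<le> d")
        case True
        hence "nw h j" using d eq unfolding nw_def by auto
        then show ?thesis using \<open>nw h i\<close> ij eq cij by (simp add: KEY_x_new)
      next
        case False
        show ?thesis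
        proof (cases "nw h j")
          case True then show ?thesis using \<open>nw h i\<close> ij eq cij by (simp add: KEY_x_new)
        next
          case nj: False
          then show ?thesis using \<open>nw h i\<close> ij eq ci by (simp add: KEY_x_new KEY_x_old less_imp_le ARa)
        qed
      qed
    next
      case False
      hence "\<not> nw h j" using eq ij unfolding nw_def by auto
      then show ?thesis using False ij eq by (simp add: KEY_x_old)
    qed
  qed
qed

end



context stp begin

lemma S_len: "u \<in> S \<Longrightarrow> length u = k + n" unfolding S_def by auto

lemma S_xsorted: "u \<in> S \<Longrightarrow> i \<le> j \<Longrightarrow> j < k \<Longrightarrow> u ! i \<le> u ! j"
proof -
  assume u: "u \<in> S" and ij: "i \<le> j" "j < k"
  have "sorted (take k u)" "length u = k + n" using u unfolding S_def by auto
  hence "take k u ! i \<le> take k u ! j" using ij by (simp add: sorted_iff_nth_mono)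
  thus ?thesis using ij by simp
qed
  
lemma S_oiso_y: "u \<in> S \<Longrightarrow> oiso v (drop k u)"
  unfolding S_def using oiso_pack[of "drop k u"] by auto

lemma S_ysorted: "u \<in> S \<Longrightarrow> sorted (drop k u)"
  using S_oiso_y sorted_oiso v_sorted by blast

lemma S_ysorted': "u \<in> S \<Longrightarrow> k \<le> i \<Longrightarrow> i \<le> j \<Longrightarrow> j < k + n \<Longrightarrow> u ! i \<le> u ! j"
proof -
  assume u: "u \<in> S" "k \<le> i" "i \<le> j" "j < k + n"
  have s: "sorted (drop k u)" using S_ysorted[OF u(1)] .
  have "drop k u ! (i - k) \<le> drop k u ! (j - k)"
  proof -
    have "i - k \<le> j - k" "j - k < length (drop k u)" using u S_len[OF u(1)] by auto
    thus ?thesis using s unfolding sorted_iff_nth_mono by blast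
  qed
  thus ?thesis using u S_len[OF u(1)] by simp
qed

lemma S_cardY: "u \<in> S \<Longrightarrow> card (set (drop k u)) = m"
  using card_set_pack[of "drop k u"] v_set unfolding S_def by auto

lemma S_cnt_y: "u \<in> S \<Longrightarrow> a < n \<Longrightarrow> cnt (set (drop k u)) (u ! (k + a)) = v ! a - 1"
proof -
  assume u: "u \<in> S" and a: "a < n"
  let ?Y = "set (drop k u)"
  have l: "length (drop k u) = n" using S_len[OF u] by simp
  have ya: "drop k u ! a = u ! (k + a)" using S_len[OF u] a by simp
  have inY: "u ! (k + a) \<in> ?Y" using l a ya by (metis nth_mem)
  have "v ! a = pack (drop k u) ! a" using u unfolding S_def by simp
  also have "\<dots> = card {y\<in>?Y. y \<le> u ! (k + a)}" using l a ya by (simp add: pack_nth)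
  also have "{y\<in>?Y. y \<le> u ! (k + a)} = insert (u ! (k + a)) {y\<in>?Y. y < u ! (k + a)}" using inY by auto
  also have "card \<dots> = Suc (cnt ?Y (u ! (k + a)))" unfolding cnt_def by (subst card_insert_disjoint) auto
  finally show ?thesis by simp
qed

lemma gmap_len: "length u = k + n \<Longrightarrow> length (gmap u) = k"
  unfolding gmap_def by simp

lemma gmap_nth: "length u = k + n \<Longrightarrow> i < k \<Longrightarrow> gmap u ! i = cnt (set (drop k u)) (u ! i)"
  unfolding gmap_def by simp

lemma S_wdes_x: "u \<in> S \<Longrightarrow> i < k \<Longrightarrow> (i \<in> DX) = (u ! i \<notin> set (drop (Suc i) u))"
proof -
  assume u: "u \<in> S" and i: "i < k"
  have "(Suc i \<in> Des I) = (Suc i \<in> wdes u)" using u unfolding S_def by simp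
  also have "\<dots> = (u ! i \<notin> set (drop (Suc i) u))" unfolding wdes_def using S_len[OF u] i n1 by simp
  finally show ?thesis unfolding DX_def using i by simp
qed

lemma S_new:
  assumes u: "u \<in> S" and i: "i < k"
  shows "(u ! i \<notin> set (drop k u)) = nw (gmap u) i"
proof
  let ?Y = "set (drop k u)"
  have L: "length u = k + n" using S_len[OF u] .
  assume ni: "u ! i \<notin> ?Y"
  define d where "d = Max {l. l < k \<and> u ! l = u ! i}"
  have fin: "finite {l. l < k \<and> u ! l = u ! i}" by simp
  have ne: "{l. l < k \<and> u ! l = u ! i} \<noteq> {}" using i by auto
  have d: "d < k" "u ! d = u ! i" "i \<le> d"
    using Max_in[OF fin ne] Max_ge[OF fin, of i] i unfolding d_def by auto
  have "u ! d \<notin> set (drop (Suc d) u)"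
  proof
    assume "u ! d \<in> set (drop (Suc d) u)"
    then obtain j where j: "Suc d \<le> j" "j < length u" "u ! j = u ! d" by (auto simp: in_set_drop_nth)
    show False
    proof (cases "j < k")
      case True
      hence "j \<le> d" using j d Max_ge[OF fin, of j] unfolding d_def by auto
      then show False using j by simp
    next
      case False
      hence "u ! j \<in> ?Y" using j unfolding in_set_drop_nth by (intro exI[of _ j]) auto
      then show False using j d ni by simp
    qed
  qed
  hence "d \<in> DX" using S_wdes_x[OF u d(1)] by simp
  moreover have "gmap u ! d = gmap u ! i" using d i L by (simp add: gmap_nth)
  ultimately show "nw (gmap u) i" unfolding nw_def using d by auto
next
  let ?Y = "set (drop k u)"
  have L: "length u = k + n" using S_len[OF u] .
  assume "nw (gmap u) i"
  then obtain d where d: "d \<in> DX" "i \<le> d" "gmap u ! d = gmap u ! i" unfolding nw_def by auto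
  have dk: "d < k" using d DX_def by auto
  have "u ! d \<notin> set (drop (Suc d) u)" using S_wdes_x[OF u dk] d by simp
  moreover have "?Y \<subseteq> set (drop (Suc d) u)" using dk by (metis Suc_leI set_drop_subset_set_drop)
  ultimately have nd: "u ! d \<notin> ?Y" by blast
  have cd: "cnt ?Y (u ! d) = cnt ?Y (u ! i)" using d dk i L by (simp add: gmap_nth)
  show "u ! i \<notin> ?Y"
  proof
    assume yi: "u ! i \<in> ?Y"
    have "u ! i \<le> u ! d" using S_xsorted[OF u d(2) dk] .
    hence "u ! i < u ! d" using yi nd by (metis le_less)
    hence "cnt ?Y (u ! i) < cnt ?Y (u ! d)" using yi by (intro cntY_strict) auto
    thus False using cd by simp
  qed
qed

end



context stp begin

definition "cc = m + (if k \<in> Des I then 1 else 0)"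

lemma S_lastocc:
  assumes u: "u \<in> S" and j: "j < k" and nj: "u ! j \<notin> set (drop k u)"
  shows "\<exists>d. j \<le> d \<and> d < k \<and> u ! d = u ! j \<and> d \<in> DX \<and> (\<forall>l. d < l \<longrightarrow> l < k \<longrightarrow> u ! l \<noteq> u ! j)"
proof -
  let ?Y = "set (drop k u)"
  define d where "d = Max {l. l < k \<and> u ! l = u ! j}"
  have fin: "finite {l. l < k \<and> u ! l = u ! j}" by simp
  have ne: "{l. l < k \<and> u ! l = u ! j} \<noteq> {}" using j by auto
  have d: "d < k" "u ! d = u ! j" "j \<le> d"
    using Max_in[OF fin ne] Max_ge[OF fin, of j] j unfolding d_def by auto
  have mx: "\<forall>l. d < l \<longrightarrow> l < k \<longrightarrow> u ! l \<noteq> u ! j"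
    using Max_ge[OF fin] unfolding d_def by (metis (mono_tags, lifting) mem_Collect_eq not_le)
  have "u ! d \<notin> set (drop (Suc d) u)"
  proof
    assume "u ! d \<in> set (drop (Suc d) u)"
    then obtain l where l: "Suc d \<le> l" "l < length u" "u ! l = u ! d" by (auto simp: in_set_drop_nth)
    show False
    proof (cases "l < k")
      case True then show False using l d mx by auto
    next
      case False
      hence "u ! l \<in> ?Y" using l unfolding in_set_drop_nth by (intro exI[of _ l]) auto
      then show False using l d nj by simp
    qed
  qed
  hence "d \<in> DX" using S_wdes_x[OF u d(1)] by simp
  then show ?thesis using d mx by blast
qed

lemma S_G: assumes u: "u \<in> S" shows "gmap u \<in> Gs k cc"
proof -
  let ?Y = "set (drop k u)"
  have L: "length u = k + n" using S_len[OF u] .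
  have fY: "finite ?Y" by simp
  have cY: "card ?Y = m" using S_cardY[OF u] .
  have "sorted (gmap u)" unfolding sorted_iff_nth_mono gmap_len[OF L]
    using S_xsorted[OF u] cnt_mono[OF fY] by (auto simp: gmap_nth[OF L])
  moreover have "\<forall>a\<in>set (gmap u). a < cc"
  proof
    fix a assume "a \<in> set (gmap u)"
    then obtain i where i: "i < k" "a = cnt ?Y (u ! i)"
      using gmap_len[OF L] gmap_nth[OF L] by (metis in_set_conv_nth)
    have am: "a \<le> m" using i cnt_le_card[OF fY] cY by simp
    show "a < cc"
    proof (cases "a = m")
      case False then show ?thesis using am unfolding cc_def by simp
    next
      case True
      have ni: "u ! i \<notin> ?Y" using cnt_lt_card[OF fY] i True cY by auto
      have ik: "i \<le> k - 1" "k - 1 < k" using i k1 by auto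
      have le: "u ! i \<le> u ! (k - 1)" using S_xsorted[OF u ik] .
      have "u ! (k - 1) \<notin> ?Y"
      proof
        assume yk: "u ! (k - 1) \<in> ?Y"
        have "cnt ?Y (u ! (k - 1)) < m" using cnt_lt_card[OF fY yk] cY by simp
        moreover have "cnt ?Y (u ! i) \<le> cnt ?Y (u ! (k - 1))" using cnt_mono[OF fY le] .
        ultimately show False using i True by simp
      qed
      hence "k - 1 \<in> DX" using S_wdes_x[OF u ik(2)] k1 by simp
      hence "k \<in> Des I" using delta_iff by simp
      then show ?thesis unfolding cc_def using am by simp
    qed
  qed
  ultimately show ?thesis unfolding Gs_def using gmap_len[OF L] by simp
qed

lemma AR6: "c < (K::nat) \<Longrightarrow> c' < K \<Longrightarrow> (2*a*K + c = 2*b*K + c') = (a = b \<and> c = c')"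
proof
  assume c: "c < K" "c' < K" and e: "2*a*K + c = 2*b*K + c'"
  have "2*a*K + c \<le> 2*b*K + c'" "2*b*K + c' \<le> 2*a*K + c" using e by simp_all
  thus "a = b \<and> c = c'" using AR4[OF c, of a b] AR4[OF c(2) c(1), of b a] by auto
qed auto

lemma S_xx_eq:
  assumes u: "u \<in> S" and ji: "j < i" "i < k"
  shows "(u ! j = u ! i) = (KEY (gmap u) j = KEY (gmap u) i)"
proof -
  let ?Y = "set (drop k u)" let ?g = "gmap u"
  have L: "length u = k + n" using S_len[OF u] .
  have fY: "finite ?Y" by simp
  have jk: "j < k" using ji by simp
  have gi: "?g ! i = cnt ?Y (u ! i)" and gj: "?g ! j = cnt ?Y (u ! j)" using ji L by (auto simp: gmap_nth)
  have ci: "card {d\<in>DX. d < i} < KK" and cj: "card {d\<in>DX. d < j} < KK" using ji by (auto intro: cardDX_lt)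
  show ?thesis
  proof (cases "nw ?g j")
    case nwj: True
    show ?thesis
    proof (cases "nw ?g i")
      case nwi: True
      have yj: "u ! j \<notin> ?Y" and yi: "u ! i \<notin> ?Y" using S_new[OF u jk] S_new[OF u ji(2)] nwj nwi by auto
      have keq: "(KEY ?g j = KEY ?g i) = (?g ! j = ?g ! i \<and> card {d\<in>DX. d < j} = card {d\<in>DX. d < i})"
        using nwj nwi ji ci cj by (simp add: KEY_x_new AR6)
      have sub: "{d\<in>DX. d < j} \<subseteq> {d\<in>DX. d < i}" using ji by auto
      have ceq: "(card {d\<in>DX. d < j} = card {d\<in>DX. d < i}) = (\<forall>d\<in>DX. \<not> (j \<le> d \<and> d < i))"
      proof
        assume "card {d\<in>DX. d < j} = card {d\<in>DX. d < i}"
        hence "{d\<in>DX. d < j} = {d\<in>DX. d < i}" using sub DX_fin by (intro card_subset_eq) auto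
        thus "\<forall>d\<in>DX. \<not> (j \<le> d \<and> d < i)" by (metis (mono_tags, lifting) mem_Collect_eq not_le)
      next
        assume "\<forall>d\<in>DX. \<not> (j \<le> d \<and> d < i)"
        hence "{d\<in>DX. d < j} = {d\<in>DX. d < i}" using ji by force
        thus "card {d\<in>DX. d < j} = card {d\<in>DX. d < i}" by simp
      qed
      show ?thesis
      proof
        assume e: "u ! j = u ! i"
        have "\<forall>d\<in>DX. \<not> (j \<le> d \<and> d < i)"
        proof (intro ballI notI)
          fix d assume dD: "d \<in> DX" and dd: "j \<le> d \<and> d < i"
          have "u ! j \<le> u ! d" "u ! d \<le> u ! Suc d" "u ! Suc d \<le> u ! i"
            using S_xsorted[OF u] dd ji by auto
          hence "u ! Suc d = u ! d" using e by simp
          hence "u ! d \<in> set (drop (Suc d) u)" using L ji dd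
            unfolding in_set_drop_nth by (intro exI[of _ "Suc d"]) auto
          thus False using S_wdes_x[OF u, of d] dD dd ji by auto
        qed
        then show "KEY ?g j = KEY ?g i" using keq ceq e gi gj by simp
      next
        assume "KEY ?g j = KEY ?g i"
        hence g: "?g ! j = ?g ! i" and nd: "\<forall>d\<in>DX. \<not> (j \<le> d \<and> d < i)" using keq ceq by auto
        show "u ! j = u ! i"
        proof (rule ccontr)
          assume ne: "u ! j \<noteq> u ! i"
          obtain d where d: "j \<le> d" "d < k" "u ! d = u ! j" "d \<in> DX" "\<forall>l. d < l \<longrightarrow> l < k \<longrightarrow> u ! l \<noteq> u ! j"
            using S_lastocc[OF u jk yj] by blast
          have "d < i"
          proof (rule ccontr)
            assume "\<not> d < i"
            hence "u ! i \<le> u ! d" using S_xsorted[OF u _ d(2)] by simp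
            moreover have "u ! j \<le> u ! i" using S_xsorted[OF u _ ji(2)] ji by simp
            ultimately show False using d ne by simp
          qed
          thus False using nd d by auto
        qed
      qed
    next
      case nwi: False
      have yj: "u ! j \<notin> ?Y" and yi: "u ! i \<in> ?Y" using S_new[OF u jk] S_new[OF u ji(2)] nwj nwi by auto
      have "KEY ?g j = 2 * (?g ! j) * KK + card {d\<in>DX. d < j}" "KEY ?g i = (2 * (?g ! i) + 1) * KK"
        using nwj nwi ji by (auto simp: KEY_x_new KEY_x_old)
      hence "KEY ?g j \<noteq> KEY ?g i" using AR5[OF cj] by metis
      then show ?thesis using yj yi by auto
    qed
  next
    case nwj: False
    show ?thesis
    proof (cases "nw ?g i")
      case nwi: True
      have yj: "u ! j \<in> ?Y" and yi: "u ! i \<notin> ?Y" using S_new[OF u jk] S_new[OF u ji(2)] nwj nwi by auto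
      have "KEY ?g i = 2 * (?g ! i) * KK + card {d\<in>DX. d < i}" "KEY ?g j = (2 * (?g ! j) + 1) * KK"
        using nwj nwi ji by (auto simp: KEY_x_new KEY_x_old)
      hence "KEY ?g j \<noteq> KEY ?g i" using AR5[OF ci] by metis
      then show ?thesis using yj yi by auto
    next
      case nwi: False
      have yj: "u ! j \<in> ?Y" and yi: "u ! i \<in> ?Y" using S_new[OF u jk] S_new[OF u ji(2)] nwj nwi by auto
      have "(KEY ?g j = KEY ?g i) = (?g ! j = ?g ! i)" using nwj nwi ji KK_pos by (simp add: KEY_x_old)
      then show ?thesis using C3[OF fY yj yi] gi gj by simp
    qed
  qed
qed

end



context stp begin

lemma keys_len[simp]: "length (keys h) = k + n" unfolding keys_def by simp
lemma keys_nth: "i < k + n \<Longrightarrow> keys h ! i = KEY h i" unfolding keys_def by simp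

lemma S_oiso_keys:
  assumes u: "u \<in> S"
  shows "oiso u (keys (gmap u))"
  unfolding oiso_def
proof (intro conjI allI impI)
  let ?Y = "set (drop k u)" let ?g = "gmap u"
  have L: "length u = k + n" using S_len[OF u] .
  show "length u = length (keys ?g)" using L by simp
  have fY: "finite ?Y" by simp
  have ov: "oiso v (drop k u)" using S_oiso_y[OF u] .
  have gS: "?g \<in> Gs k cc" using S_G[OF u] .
  hence gs: "sorted ?g" "length ?g = k" unfolding Gs_def by auto
  fix i j assume i: "i < length u" and j: "j < length u"
  have inY: "\<And>a. k \<le> a \<Longrightarrow> a < k + n \<Longrightarrow> u ! a \<in> ?Y"
    using L unfolding in_set_drop_nth by auto
  have cy: "\<And>a. k \<le> a \<Longrightarrow> a < k + n \<Longrightarrow> cnt ?Y (u ! a) = v ! (a - k) - 1"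
    using S_cnt_y[OF u] by (metis add_diff_inverse_nat less_diff_conv2 not_less add.commute)
  have gx: "\<And>a. a < k \<Longrightarrow> ?g ! a = cnt ?Y (u ! a)" using L by (simp add: gmap_nth)
  have cD: "\<And>a. a < k \<Longrightarrow> card {d\<in>DX. d < a} < KK" by (auto intro: cardDX_lt)
  have vpos: "\<And>a. k \<le> a \<Longrightarrow> a < k + n \<Longrightarrow> 1 \<le> v ! (a - k)" using v_pos by auto
  show "(u ! i \<le> u ! j) = (keys ?g ! i \<le> keys ?g ! j)"
  proof (cases "k \<le> i")
    case ki: True
    show ?thesis
    proof (cases "k \<le> j")
      case kj: True
      have "(u ! i \<le> u ! j) = (drop k u ! (i - k) \<le> drop k u ! (j - k))" using ki kj i j by simp
      also have "\<dots> = (v ! (i - k) \<le> v ! (j - k))" using ov ki kj i j L unfolding oiso_def by simp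
      also have "\<dots> = (KEY ?g i \<le> KEY ?g j)" using ki kj i j L vpos[of i] vpos[of j] KK_pos
        by (simp add: KEY_y) linarith
      finally show ?thesis using i j L by (simp add: keys_nth)
    next
      case kj: False
      have yi: "u ! i \<in> ?Y" using inY ki i L by simp
      have "(u ! i \<le> u ! j) = (if u ! j \<in> ?Y then cnt ?Y (u ! i) \<le> cnt ?Y (u ! j) else cnt ?Y (u ! i) < cnt ?Y (u ! j))"
        using C2[OF fY yi] .
      also have "\<dots> = (if nw ?g j then v ! (i - k) - 1 < ?g ! j else v ! (i - k) - 1 \<le> ?g ! j)"
        using S_new[OF u, of j] kj cy[of i] ki i L gx[of j] by auto
      also have "\<dots> = (KEY ?g i \<le> KEY ?g j)"
        using kj ki AR2[OF cD[of j], of "v ! (i - k) - 1" "?g ! j"] KK_pos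
        by (auto simp: KEY_y KEY_x_new KEY_x_old)
      finally show ?thesis using i j L by (simp add: keys_nth)
    qed
  next
    case ki: False
    show ?thesis
    proof (cases "k \<le> j")
      case kj: True
      have yj: "u ! j \<in> ?Y" using inY kj j L by simp
      have "(u ! i \<le> u ! j) = (?g ! i \<le> v ! (j - k) - 1)"
        using C1[OF fY yj, of "u ! i"] cy[of j] kj j L gx[of i] ki by simp
      also have "\<dots> = (KEY ?g i \<le> KEY ?g j)"
      proof (cases "nw ?g i")
        case True
        have "KEY ?g i = 2 * (?g ! i) * KK + card {d\<in>DX. d < i}" "KEY ?g j = (2 * (v ! (j - k) - 1) + 1) * KK"
          using True kj ki by (auto simp: KEY_y KEY_x_new)
        then show ?thesis using AR1[OF cD[of i], of "?g ! i" "v ! (j - k) - 1"] ki by simp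
      next
        case False
        have "KEY ?g i = (2 * (?g ! i) + 1) * KK" "KEY ?g j = (2 * (v ! (j - k) - 1) + 1) * KK"
          using False kj ki by (auto simp: KEY_y KEY_x_old)
        then show ?thesis using AR3[OF KK_pos, of "?g ! i" "v ! (j - k) - 1"] by simp
      qed
      finally show ?thesis using i j L by (simp add: keys_nth)
    next
      case kj: False
      show ?thesis
      proof (cases "i \<le> j")
        case True
        have "u ! i \<le> u ! j" using S_xsorted[OF u True] kj by simp
        moreover have "KEY ?g i \<le> KEY ?g j" using KEY_mono[OF gs True] kj by simp
        ultimately show ?thesis using i j L by (simp add: keys_nth)
      next
        case False
        hence ji: "j < i" by simp
        have "u ! j \<le> u ! i" using S_xsorted[OF u] ji ki by simp
        moreover have "KEY ?g j \<le> KEY ?g i" using KEY_mono[OF gs] ji ki by simp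
        moreover have "(u ! j = u ! i) = (KEY ?g j = KEY ?g i)" using S_xx_eq[OF u ji] ki by simp
        ultimately show ?thesis using i j L by (simp add: keys_nth) (metis le_antisym)
      qed
    qed
  qed
qed

lemma S_inj: "inj_on gmap S"
proof (rule inj_onI)
  fix u u' assume u: "u \<in> S" and u': "u' \<in> S" and e: "gmap u = gmap u'"
  have "u = pack u" using u unfolding S_def by (simp add: packed_pack_id)
  also have "\<dots> = pack (keys (gmap u))" using oiso_pack_eq[OF S_oiso_keys[OF u]] .
  also have "\<dots> = pack (keys (gmap u'))" using e by simp
  also have "\<dots> = pack u'" using oiso_pack_eq[OF S_oiso_keys[OF u']] by simp
  also have "\<dots> = u'" using u' unfolding S_def by (simp add: packed_pack_id)
  finally show "u = u'" .
qed

end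



context stp begin

lemma cnt_oiso:
  assumes o: "oiso u w" and i: "i < k" and L: "k \<le> length u"
  shows "cnt (set (drop k u)) (u ! i) = cnt (set (drop k w)) (w ! i)"
proof -
  have Lw: "length w = length u" using o by (simp add: oiso_def)
  have "cnt (set (drop k u)) (u ! i) = card {j. j < length (drop k u) \<and> drop k u ! j < u ! i \<and> (\<forall>l<j. drop k u ! l \<noteq> drop k u ! j)}"
    unfolding cnt_def by (rule card_first_occ)
  also have "{j. j < length (drop k u) \<and> drop k u ! j < u ! i \<and> (\<forall>l<j. drop k u ! l \<noteq> drop k u ! j)}
     = {j. j < length (drop k w) \<and> drop k w ! j < w ! i \<and> (\<forall>l<j. drop k w ! l \<noteq> drop k w ! j)}"
  proof (intro Collect_cong)
    fix j
    show "(j < length (drop k u) \<and> drop k u ! j < u ! i \<and> (\<forall>l<j. drop k u ! l \<noteq> drop k u ! j)) =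
          (j < length (drop k w) \<and> drop k w ! j < w ! i \<and> (\<forall>l<j. drop k w ! l \<noteq> drop k w ! j))"
    proof (cases "j < length (drop k u)")
      case True
      have jj: "k + j < length u" using True by simp
      have "\<forall>l<j. (u ! (k + l) = u ! (k + j)) = (w ! (k + l) = w ! (k + j))"
        using oiso_eq[OF o] jj by auto
      moreover have "(u ! (k + j) < u ! i) = (w ! (k + j) < w ! i)" using oiso_less[OF o jj] i L by simp
      ultimately show ?thesis using True L Lw by simp
    next
      case False then show ?thesis using Lw by simp
    qed
  qed
  also have "card \<dots> = cnt (set (drop k w)) (w ! i)"
    unfolding cnt_def by (rule card_first_occ[symmetric])
  finally show ?thesis .
qed

lemma Gs_old_lt:
  assumes h: "h \<in> Gs k cc" and i: "i < k" and nn: "\<not> nw h i"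
  shows "h ! i < m"
proof (rule ccontr)
  assume "\<not> h ! i < m"
  have hs: "sorted h" "length h = k" "\<forall>a\<in>set h. a < cc" using h unfolding Gs_def by auto
  have hi: "h ! i < cc" using hs i by simp
  have kD: "k \<in> Des I" using hi \<open>\<not> h ! i < m\<close> unfolding cc_def by (auto split: if_splits)
  hence hm: "h ! i = m" and ccv: "cc = m + 1" using hi \<open>\<not> h ! i < m\<close> unfolding cc_def by auto
  have d: "k - 1 \<in> DX" using kD delta_iff by simp
  have "h ! i \<le> h ! (k - 1)" using hs i by (simp add: sorted_iff_nth_mono)
  moreover have "h ! (k - 1) < m + 1" using hs k1 ccv by (metis diff_less nth_mem zero_less_one less_le_trans)
  ultimately have "h ! (k - 1) = h ! i" using hm by simp
  hence "nw h i" unfolding nw_def using d i by (intro bexI[of _ "k - 1"]) auto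
  thus False using nn by simp
qed

lemma Gs_le_m: "h \<in> Gs k cc \<Longrightarrow> i < k \<Longrightarrow> h ! i \<le> m"
  unfolding Gs_def cc_def by (auto split: if_splits) (metis nth_mem less_Suc_eq_le Suc_eq_plus1, metis nth_mem less_imp_le)

lemma KEYy_eq: "k \<le> i \<Longrightarrow> i < k + n \<Longrightarrow> k \<le> j \<Longrightarrow> j < k + n \<Longrightarrow>
   (KEY h i \<le> KEY h j) = (v ! (i - k) \<le> v ! (j - k))"
  using v_pos[of "i - k"] v_pos[of "j - k"] KK_pos by (simp add: KEY_y) linarith

lemma keys_sorted_x: assumes h: "h \<in> Gs k cc" shows "sorted (take k (keys h))"
  unfolding sorted_iff_nth_mono
proof (intro allI impI)
  have hs: "sorted h" "length h = k" using h unfolding Gs_def by auto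
  fix i j assume ij: "i \<le> j" "j < length (take k (keys h))"
  hence jk: "j < k" by simp
  show "take k (keys h) ! i \<le> take k (keys h) ! j"
    using KEY_mono[OF hs ij(1) jk] ij jk by (simp add: keys_nth)
qed

lemma keys_oiso_v: "oiso (drop k (keys h)) v"
  unfolding oiso_def using v_len KEYy_eq by (auto simp: keys_nth)

end



context stp begin

lemma KEYy_eq': "k \<le> i \<Longrightarrow> i < k + n \<Longrightarrow> k \<le> j \<Longrightarrow> j < k + n \<Longrightarrow>
   (KEY h i = KEY h j) = (v ! (i - k) = v ! (j - k))"
  using KEYy_eq[of i j h] KEYy_eq[of j i h] by (metis order.eq_iff)

lemma wdes_keys:
  assumes h: "h \<in> Gs k cc"
  shows "wdes (keys h) = Des I"
proof -
  have hs: "sorted h" "length h = k" using h unfolding Gs_def by auto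
  have main: "(\<forall>j. p \<le> j \<and> j < k + n \<longrightarrow> KEY h j \<noteq> KEY h (p - 1)) = (p \<in> Des I)"
    if p: "1 \<le> p" "p < k + n" for p
  proof (cases "k < p")
    case True
    have a: "0 < p - k" "p - k < n" using True p by auto
    have pk: "p - 1 - k = p - k - 1" by simp
    have eqv: "(p \<in> Des I) = (v ! (p - k - 1) \<noteq> v ! (p - k))"
      using v_bound[OF a] True unfolding DY_def by auto
    show ?thesis
    proof
      assume "\<forall>j. p \<le> j \<and> j < k + n \<longrightarrow> KEY h j \<noteq> KEY h (p - 1)"
      hence "KEY h p \<noteq> KEY h (p - 1)" using p by auto
      hence "v ! (p - k) \<noteq> v ! (p - 1 - k)" using KEYy_eq'[of p "p - 1" h] True p by simp
      thus "p \<in> Des I" using eqv pk by simp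
    next
      assume pD: "p \<in> Des I"
      have "p - k - 1 \<le> p - k" "p - k < n" using a by auto
      hence "v ! (p - k - 1) \<le> v ! (p - k)" using sorted_nth_mono[OF v_sorted] v_len by simp
      hence lt: "v ! (p - k - 1) < v ! (p - k)" using eqv pD by simp
      show "\<forall>j. p \<le> j \<and> j < k + n \<longrightarrow> KEY h j \<noteq> KEY h (p - 1)"
      proof (intro allI impI)
        fix j assume j: "p \<le> j \<and> j < k + n"
        have "p - k \<le> j - k" "j - k < n" using j True by auto
        hence "v ! (p - k) \<le> v ! (j - k)" using sorted_nth_mono[OF v_sorted] v_len by simp
        hence "v ! (j - k) \<noteq> v ! (p - 1 - k)" using lt pk by simp
        moreover have "k \<le> p - 1" "p - 1 < k + n" "k \<le> j" using True p j by auto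
        ultimately show "KEY h j \<noteq> KEY h (p - 1)" using KEYy_eq'[of j "p - 1" h] j by simp
      qed
    qed
  next
    case False
    define i where "i = p - 1"
    have i: "i < k" "p = Suc i" using False p unfolding i_def by auto
    have ci: "card {d\<in>DX. d < i} < KK" using i by (auto intro: cardDX_lt)
    show ?thesis
    proof (cases "nw h i")
      case False
      have hm: "h ! i < m" using Gs_old_lt[OF h i(1) False] .
      have "Suc (h ! i) \<in> set v" using v_set hm by simp
      then obtain a where a: "a < n" "v ! a = Suc (h ! i)" using v_len by (metis in_set_conv_nth)
      have "KEY h (k + a) = KEY h i" using a i False by (simp add: KEY_y KEY_x_old)
      moreover have "p \<le> k + a" "k + a < k + n" using a i by auto
      ultimately have l: "\<not> (\<forall>j. p \<le> j \<and> j < k + n \<longrightarrow> KEY h j \<noteq> KEY h (p - 1))"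
        unfolding i_def by auto
      have "p \<notin> Des I"
      proof
        assume "p \<in> Des I"
        hence "i \<in> DX" unfolding DX_def using i by simp
        hence "nw h i" unfolding nw_def by auto
        thus False using False by simp
      qed
      then show ?thesis using l by simp
    next
      case nwi: True
      have Ki: "KEY h i = 2 * (h ! i) * KK + card {d\<in>DX. d < i}" using KEY_x_new[OF i(1) nwi] .
      show ?thesis
      proof (cases "i \<in> DX")
        case True
        hence pD: "p \<in> Des I" unfolding DX_def using i by simp
        have "\<forall>j. p \<le> j \<and> j < k + n \<longrightarrow> KEY h j \<noteq> KEY h i"
        proof (intro allI impI)
          fix j assume j: "p \<le> j \<and> j < k + n"
          show "KEY h j \<noteq> KEY h i"
          proof (cases "k \<le> j")
            case True
            have "KEY h j = (2 * (v ! (j - k) - 1) + 1) * KK" using True by (simp add: KEY_y)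
            then show ?thesis using Ki AR5[OF ci, of "h ! i" "v ! (j - k) - 1"] by simp
          next
            case jk: False
            show ?thesis
            proof (cases "nw h j")
              case False
              have "KEY h j = (2 * (h ! j) + 1) * KK" using False jk by (simp add: KEY_x_old)
              then show ?thesis using Ki AR5[OF ci, of "h ! i" "h ! j"] by simp
            next
              case nwj: True
              have cj: "card {d\<in>DX. d < j} < KK" using jk by (auto intro: cardDX_lt)
              have ij: "i < j" using j i by simp
              have "i \<in> {d\<in>DX. d < j}" "i \<notin> {d\<in>DX. d < i}" using True ij by auto
              moreover have "{d\<in>DX. d < i} \<subseteq> {d\<in>DX. d < j}" using ij by auto
              ultimately have "{d\<in>DX. d < i} \<subset> {d\<in>DX. d < j}" by blast
              hence "card {d\<in>DX. d < i} < card {d\<in>DX. d < j}" using DX_fin by (intro psubset_card_mono) auto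
              then show ?thesis using Ki nwj jk AR6[OF cj ci] by (simp add: KEY_x_new)
            qed
          qed
        qed
        then show ?thesis using pD unfolding i_def by simp
      next
        case False
        obtain d where d: "d \<in> DX" "i \<le> d" "h ! d = h ! i" using nwi unfolding nw_def by auto
        have "d \<noteq> i" using d False by auto
        hence dp: "p \<le> d" "d < k" using d i DX_sub by auto
        have "h ! i \<le> h ! p" "h ! p \<le> h ! d" using hs dp i by (auto simp: sorted_iff_nth_mono)
        hence hp: "h ! p = h ! i" using d by simp
        have nwp: "nw h p" unfolding nw_def using d dp hp by auto
        have "{d\<in>DX. d < p} = {d\<in>DX. d < i}" using False i by (auto simp: less_Suc_eq)
        hence "KEY h p = KEY h i" using Ki nwp hp dp by (simp add: KEY_x_new)
        hence "\<not> (\<forall>j. p \<le> j \<and> j < k + n \<longrightarrow> KEY h j \<noteq> KEY h (p - 1))"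
          using dp unfolding i_def by auto
        moreover have "p \<notin> Des I" using False i unfolding DX_def by simp
        ultimately show ?thesis by simp
      qed
    qed
  qed
  show ?thesis
  proof (intro set_eqI)
    fix p
    show "p \<in> wdes (keys h) \<longleftrightarrow> p \<in> Des I"
    proof (cases "1 \<le> p \<and> p < k + n")
      case True
      then show ?thesis using main[of p] unfolding wdes_alt by (auto simp: keys_nth)
    next
      case False
      then show ?thesis using DesI_bounds[of p] unfolding wdes_alt by auto
    qed
  qed
qed

end



context stp begin

definition "fY a = (2 * (a - 1) + 1) * KK"

lemma drop_keys: "drop k (keys h) = map fY v"
  by (rule nth_equalityI) (auto simp: v_len keys_nth KEY_y fY_def)

lemma fY_inj: "inj_on fY {1..m}"
  unfolding fY_def inj_on_def using KK_pos by auto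

lemma cnt_keys:
  assumes h: "h \<in> Gs k cc" and i: "i < k"
  shows "cnt (set (drop k (keys h))) (keys h ! i) = h ! i"
proof -
  let ?X = "KEY h i"
  have ki: "keys h ! i = ?X" using i by (simp add: keys_nth)
  have sY: "set (drop k (keys h)) = fY ` {1..m}" by (simp add: drop_keys v_set)
  have ci: "card {d\<in>DX. d < i} < KK" using i by (auto intro: cardDX_lt)
  have lt: "(fY a < ?X) = (a - 1 < h ! i)" for a
  proof (cases "nw h i")
    case True
    then show ?thesis using AR2'[OF ci, of "a - 1" "h ! i"] i by (simp add: KEY_x_new fY_def)
  next
    case False
    then show ?thesis using AR3'[OF KK_pos, of "a - 1" "h ! i"] i by (simp add: KEY_x_old fY_def)
  qed
  have hm: "h ! i \<le> m" using Gs_le_m[OF h i] .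
  have "{b\<in>fY ` {1..m}. b < ?X} = fY ` {a\<in>{1..m}. fY a < ?X}" by auto
  moreover have "inj_on fY {a\<in>{1..m}. fY a < ?X}" by (rule inj_on_subset[OF fY_inj]) auto
  ultimately have "cnt (fY ` {1..m}) ?X = card {a\<in>{1..m}. fY a < ?X}"
    unfolding cnt_def by (simp only: card_image)
  also have "{a\<in>{1..m}. fY a < ?X} = {1..h ! i}" using hm by (auto simp: lt)
  finally show ?thesis using sY ki by simp
qed

lemma keys_S:
  assumes h: "h \<in> Gs k cc"
  shows "pack (keys h) \<in> S" and "gmap (pack (keys h)) = h"
proof -
  let ?w = "keys h" let ?u = "pack ?w"
  have o: "oiso ?u ?w" by (rule oiso_pack)
  have L: "length ?u = k + n" by simp
  have "wdes ?u = Des I" using wdes_oiso[OF o] wdes_keys[OF h] by simp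
  moreover have "sorted (take k ?u)" using sorted_oiso[OF oiso_take[OF o, of k]] keys_sorted_x[OF h] by simp
  moreover have "pack (drop k ?u) = v"
  proof -
    have "pack (drop k ?u) = pack (drop k ?w)" by (rule oiso_pack_eq[OF oiso_drop[OF o]])
    also have "\<dots> = pack v" by (rule oiso_pack_eq[OF keys_oiso_v])
    also have "\<dots> = v" by (rule packed_pack_id[OF v_packed])
    finally show ?thesis .
  qed
  ultimately show "?u \<in> S" unfolding S_def using packed_pack L by auto
  have hs: "length h = k" using h unfolding Gs_def by auto
  show "gmap ?u = h"
  proof (rule nth_equalityI)
    show "length (gmap ?u) = length h" using gmap_len[OF L] hs by simp
    fix i assume "i < length (gmap ?u)"
    hence i: "i < k" using gmap_len[OF L] by simp
    have "gmap ?u ! i = cnt (set (drop k ?u)) (?u ! i)" using gmap_nth[OF L i] .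
    also have "\<dots> = cnt (set (drop k ?w)) (?w ! i)" using cnt_oiso[OF o i] L by simp
    also have "\<dots> = h ! i" using cnt_keys[OF h i] .
    finally show "gmap ?u ! i = h ! i" .
  qed
qed

lemma S_bij: "bij_betw gmap S (Gs k cc)"
proof (rule bij_betw_imageI)
  show "inj_on gmap S" by (rule S_inj)
  show "gmap ` S = Gs k cc"
  proof
    show "gmap ` S \<subseteq> Gs k cc" using S_G by auto
    show "Gs k cc \<subseteq> gmap ` S"
    proof
      fix h assume h: "h \<in> Gs k cc"
      then show "h \<in> gmap ` S" using keys_S[OF h] by (metis image_eqI)
    qed
  qed
qed

end



context stp begin

lemma S_sinv:
  assumes u: "u \<in> S"
  shows "sinv u = sum_list (gmap u)"
proof -
  let ?Y = "set (drop k u)" let ?N = "k + n"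
  have L: "length u = ?N" using S_len[OF u] .
  define B where "B i = {j. k \<le> j \<and> j < ?N \<and> u ! j < u ! i \<and> u ! j \<notin> set (drop (Suc j) u)}" for i
  have A: "{(i, j). i < j \<and> j < length u \<and> u ! i > u ! j \<and> u ! j \<notin> set (drop (Suc j) u)} = Sigma {..<k} B"
  proof (intro set_eqI iffI)
    fix x assume "x \<in> {(i, j). i < j \<and> j < length u \<and> u ! i > u ! j \<and> u ! j \<notin> set (drop (Suc j) u)}"
    then obtain i j where x: "x = (i, j)" "i < j" "j < ?N" "u ! i > u ! j" "u ! j \<notin> set (drop (Suc j) u)"
      using L by auto
    have jk: "k \<le> j"
    proof (rule ccontr)
      assume "\<not> k \<le> j" thus False using S_xsorted[OF u, of i j] x by auto
    qed
    have ik: "i < k"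
    proof (rule ccontr)
      assume "\<not> i < k" thus False using S_ysorted'[OF u, of i j] x by auto
    qed
    show "x \<in> Sigma {..<k} B" using x jk ik unfolding B_def by auto
  next
    fix x assume "x \<in> Sigma {..<k} B"
    then show "x \<in> {(i, j). i < j \<and> j < length u \<and> u ! i > u ! j \<and> u ! j \<notin> set (drop (Suc j) u)}"
      unfolding B_def using L by auto
  qed
  have cB: "card (B i) = cnt ?Y (u ! i)" if i: "i < k" for i
  proof -
    have "bij_betw (\<lambda>j. u ! j) (B i) {b\<in>?Y. b < u ! i}"
    proof (rule bij_betwI')
      fix x y assume x: "x \<in> B i" and y: "y \<in> B i"
      show "(u ! x = u ! y) = (x = y)"
      proof
        assume e: "u ! x = u ! y"
        show "x = y"
        proof (rule ccontr)
          assume "x \<noteq> y"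
          hence "x < y \<or> y < x" by auto
          thus False
          proof
            assume "x < y"
            hence "u ! x \<in> set (drop (Suc x) u)" using y e L unfolding B_def in_set_drop_nth
              by (intro exI[of _ y]) auto
            thus False using x unfolding B_def by auto
          next
            assume "y < x"
            hence "u ! y \<in> set (drop (Suc y) u)" using x e L unfolding B_def in_set_drop_nth
              by (intro exI[of _ x]) auto
            thus False using y unfolding B_def by auto
          qed
        qed
      qed simp
    next
      fix x assume "x \<in> B i"
      then show "u ! x \<in> {b\<in>?Y. b < u ! i}" unfolding B_def in_set_drop_nth using L by auto
    next
      fix b assume b: "b \<in> {b\<in>?Y. b < u ! i}"
      then obtain j0 where j0: "k \<le> j0" "j0 < ?N" "u ! j0 = b" using L by (auto simp: in_set_drop_nth)
      define j where "j = Max {j. k \<le> j \<and> j < ?N \<and> u ! j = b}"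
      have fin: "finite {j. k \<le> j \<and> j < ?N \<and> u ! j = b}" by simp
      have ne: "{j. k \<le> j \<and> j < ?N \<and> u ! j = b} \<noteq> {}" using j0 by auto
      have j: "k \<le> j" "j < ?N" "u ! j = b" using Max_in[OF fin ne] unfolding j_def by auto
      have "u ! j \<notin> set (drop (Suc j) u)"
      proof
        assume "u ! j \<in> set (drop (Suc j) u)"
        then obtain l where l: "Suc j \<le> l" "l < length u" "u ! l = u ! j" by (auto simp: in_set_drop_nth)
        hence "l \<le> j" using Max_ge[OF fin, of l] j L unfolding j_def by auto
        thus False using l by simp
      qed
      hence "j \<in> B i" using j b unfolding B_def by auto
      then show "\<exists>a\<in>B i. b = u ! a" using j by auto
    qed
    thus ?thesis unfolding cnt_def by (simp add: bij_betw_same_card)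
  qed
  have "sinv u = card (Sigma {..<k} B)" unfolding sinv_def A[symmetric] by simp
  also have "\<dots> = (\<Sum>i<k. card (B i))"
    by (rule card_SigmaI) (auto simp: B_def)
  also have "\<dots> = (\<Sum>i<k. gmap u ! i)" using cB L by (simp add: gmap_nth)
  also have "\<dots> = sum_list (gmap u)" using gmap_len[OF L] by (simp add: sum_list_sum_nth atLeast0LessThan)
  finally show ?thesis .
qed

end



context stp begin

lemma wdes_bounds: "p \<in> wdes u \<Longrightarrow> 0 < p \<and> p < length u" unfolding wdes_def by auto

lemma WC_iff: "length u = k + n \<Longrightarrow> (WC u = I) = (wdes u = Des I)"
proof
  assume L: "length u = k + n" and "WC u = I"
  hence "Des I = Des (comp_of (k + n) (wdes u))" unfolding WC_def by simp
  also have "\<dots> = {p\<in>wdes u. 0 < p \<and> p < k + n}" using comp_of_props(1) k1 by simp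
  also have "\<dots> = wdes u" using wdes_bounds[of _ u] L by auto
  finally show "wdes u = Des I" by simp
next
  assume L: "length u = k + n" and "wdes u = Des I"
  thus "WC u = I" unfolding WC_def using comp_of_Des[OF cI sI] k1 by simp
qed

lemma T_finite: "finite {u. packed u \<and> length u = k + n \<and> WC u = I}"
proof -
  have "{u. packed u \<and> length u = k + n \<and> WC u = I} \<subseteq> {u. set u \<subseteq> {1..k+n} \<and> length u = k + n}"
  proof (safe)
    fix u x assume p: "packed u" and L: "length u = k + n" and x: "x \<in> set u"
    obtain M where M: "set u = {1..M}" using p unfolding packed_def by blast
    have "card (set u) \<le> k + n" using L card_length by metis
    thus "x \<in> {1..k+n}" using M x by auto
  qed
  thus ?thesis by (rule finite_subset) (simp add: finite_lists_length_eq)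
qed

lemma qstar_val:
  assumes p: "packed u" and L: "length u = k + n"
  shows "qstar (S_tilde k) (M v) u = (if sorted (take k u) \<and> pack (drop k u) = v then qX ^ sinv u else (0::'a::field_char_0 poly fract))"
proof -
  let ?F = "\<lambda>i. S_tilde k (pack (take i u)) * M v (pack (drop i u)) *
          (qX::'a poly fract) powi (int (sinv u) - int (sinv (pack (take i u))) - int (sinv (pack (drop i u))))"
  have z: "?F i = 0" if "i \<in> {0..length u} - {k}" for i
  proof -
    have "S_tilde k (pack (take i u)) = (0::'a poly fract)" using that L by (simp add: S_tilde_def)
    thus ?thesis by simp
  qed
  have "qstar (S_tilde k) (M v) u = sum ?F {0..length u}" using p unfolding qstar_def by simp
  also have "\<dots> = ?F k + sum ?F ({0..length u} - {k})" using L by (subst sum.remove[of _ k]) auto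
  also have "sum ?F ({0..length u} - {k}) = 0" by (rule sum.neutral) (use z in blast)
  hence "?F k + sum ?F ({0..length u} - {k}) = ?F k" by simp
  also have "\<dots> = (if sorted (take k u) \<and> pack (drop k u) = v then qX ^ sinv u else 0)"
  proof -
    have so: "sorted (pack (take k u)) = sorted (take k u)" by (rule sorted_oiso[OF oiso_pack])
    have lk: "length (pack (take k u)) = k" using L by simp
    show ?thesis
    proof (cases "sorted (take k u) \<and> pack (drop k u) = v")
      case True
      have "sinv (pack (take k u)) = 0" using so True sinv_sorted by simp
      moreover have "sinv (pack (drop k u)) = 0" using True sinv_sorted v_sorted by simp
      ultimately show ?thesis using True so lk packed_pack
        by (simp add: S_tilde_def M_def power_int_of_nat)
    next
      case False
      then show ?thesis using so by (auto simp: S_tilde_def M_def)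
    qed
  qed
  finally show ?thesis .
qed

lemma psi_val: "psi_coeff I (qstar (S_tilde k) (M v)) = (\<Sum>u\<in>S. qX ^ sinv u :: 'a::field_char_0 poly fract)"
proof -
  let ?T = "{u. packed u \<and> length u = sum_list I \<and> WC u = I}"
  have T: "?T = {u. packed u \<and> length u = k + n \<and> WC u = I}" using sI by simp
  have "psi_coeff I (qstar (S_tilde k) (M v)) = (\<Sum>u\<in>?T. qstar (S_tilde k) (M v) u)"
    unfolding psi_coeff_def by simp
  also have "\<dots> = (\<Sum>u\<in>?T. if u \<in> S then qX ^ sinv u else (0::'a poly fract))"
  proof (rule sum.cong[OF refl])
    fix u assume "u \<in> ?T"
    hence u: "packed u" "length u = k + n" "wdes u = Des I" using T WC_iff by auto
    show "qstar (S_tilde k) (M v) u = (if u \<in> S then qX ^ sinv u else 0)"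
      using qstar_val[OF u(1,2)] u unfolding S_def by simp
  qed
  also have "\<dots> = (\<Sum>u\<in>?T \<inter> S. qX ^ sinv u)"
    using T_finite T by (simp add: sum.inter_restrict)
  also have "?T \<inter> S = S" using WC_iff T unfolding S_def by auto
  finally show ?thesis .
qed

lemma main_sum: "(\<Sum>u\<in>S. qX ^ sinv u) = (qbinom (k + (cc - 1)) (cc - 1) :: 'a::field_char_0 poly fract)"
proof -
  have "(\<Sum>u\<in>S. (qX::'a poly fract) ^ sinv u) = (\<Sum>u\<in>S. qX ^ sum_list (gmap u))"
    using S_sinv by simp
  also have "\<dots> = (\<Sum>h\<in>Gs k cc. qX ^ sum_list h)"
    by (rule sum.reindex_bij_betw[OF S_bij])
  also have "cc = Suc (cc - 1)" using m_pos unfolding cc_def by simp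
  hence "(\<Sum>h\<in>Gs k cc. (qX::'a poly fract) ^ sum_list h) = qbinom (k + (cc - 1)) (cc - 1)"
    using Gs_sum[of k "cc - 1"] by simp
  finally show ?thesis .
qed

lemma rs:
  "length I - length (comp_of k (Des I \<inter> {1..k - 1})) = cc - 1"
  "length (comp_of k (Des I \<inter> {1..k - 1})) \<le> length I"
proof -
  let ?A = "Des I \<inter> {1..<k}" let ?B = "Des I \<inter> {k}" let ?C = "Des I \<inter> {k<..}"
  have fD: "finite (Des I)" by (simp add: Des_psums)
  have Ieq: "Des I = ?A \<union> ?B \<union> ?C"
  proof (intro equalityI subsetI)
    fix p assume p: "p \<in> Des I"
    hence "0 < p" using DesI_bounds by blast
    thus "p \<in> ?A \<union> ?B \<union> ?C" using p by (cases "p < k"; cases "p = k") auto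
  qed auto
  have c1: "card (?A \<union> ?B \<union> ?C) = card (?A \<union> ?B) + card ?C"
    using fD by (intro card_Un_disjoint) auto
  have c2: "card (?A \<union> ?B) = card ?A + card ?B"
    using fD by (intro card_Un_disjoint) auto
  have cD: "card (Des I) = card ?A + card ?B + card ?C" using Ieq c1 c2 by simp
  have cC: "card ?C = card DY"
  proof -
    have "?C = (\<lambda>a. k + a) ` DY"
    proof (intro equalityI subsetI)
      fix p assume p: "p \<in> ?C"
      hence "p - k \<in> DY" "p = k + (p - k)" unfolding DY_def by auto
      thus "p \<in> (\<lambda>a. k + a) ` DY" by (metis image_eqI)
    next
      fix p assume "p \<in> (\<lambda>a. k + a) ` DY"
      then obtain a where "a \<in> DY" "p = k + a" by auto
      thus "p \<in> ?C" unfolding DY_def by auto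
    qed
    thus ?thesis by (simp add: card_image inj_on_def)
  qed
  have ne: "I \<noteq> []" using sI n1 by auto
  have r: "length I = card (Des I) + 1" using card_Des[OF cI] ne by simp
  have "{p \<in> Des I \<inter> {1..k - 1}. 0 < p \<and> p < k} = ?A" by auto
  hence s: "length (comp_of k (Des I \<inter> {1..k - 1})) = card ?A + 1" using comp_of_props(2) k1 by simp
  have cB: "card ?B = (if k \<in> Des I then 1 else 0)" by auto
  show "length I - length (comp_of k (Des I \<inter> {1..k - 1})) = cc - 1"
    using r s cD cB cC I'_props(2) unfolding cc_def by simp
  show "length (comp_of k (Des I \<inter> {1..k - 1})) \<le> length I" using r s cD by simp
qed

end

theorem mainTheorem17:
  fixes k n :: nat and I :: "nat list"
  assumes "1 \<le> k" and "1 \<le> n"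
    and "is_comp I" and "sum_list I = k + n"
  shows "let I' = comp_of n {a. 1 \<le> a \<and> k + a \<in> Des I};
             v = nondec_word I';
             r = length I;
             K = comp_of k (Des I \<inter> {1..k - 1});
             s = length K
         in psi_coeff I (qstar (S_tilde k) (M v)) =
            (qbinom (k + r - s) (r - s) :: 'a::field_char_0 poly fract)"
proof -
  interpret stp k n I using assms by unfold_locales
  have vv: "nondec_word (comp_of n {a. 1 \<le> a \<and> k + a \<in> Des I}) = v"
    unfolding v_def I'_def DY_def ..
  have e: "k + length I - length (comp_of k (Des I \<inter> {1..k - 1})) = k + (cc - 1)"
    using rs by simp
  show ?thesis unfolding Let_def vv psi_val main_sum e rs(1) ..
qed



end
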